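(* Let $\phi:\Gamma\twoheadrightarrow\Lambda$ be an epimorphism of finite-dimensional algebras and $\mathcal M$ a full subcategory of $\mathrm{mod}(\Gamma)$ which contains $\mathrm{mod}(\Lambda)$. Then (1) the poset $\mathrm{widshad}_{\mathcal M}(\Gamma)$ is a complete lattice, and (2) the maps $(-)\cap\mathcal M:\mathrm{wide}(\Gamma)\to\mathrm{widshad}_{\mathcal M}(\Gamma)$ and $(-)\cap\mathrm{mod}(\Lambda):\mathrm{widshad}_{\mathcal M}(\Gamma)\to\mathrm{wide}(\Lambda)$ are surjective meet-semilattice maps.
   Context: $\mathrm{mod}(\Gamma)$ is the category of finitely generated left $\Gamma$-modules; via $\phi$, $\mathrm{mod}(\Lambda)$ is a full subcategory of $\mathrm{mod}(\Gamma)$. Subcategories are full and closed under isomorphism. A subcategory is wide if it is abelian (closed under kernels and cokernels) and closed under extensions; $\mathrm{wide}(\Gamma)$ is the set of wide subcategories ordered by inclusion. For $\mathcal W\in\mathrm{wide}(\Gamma)$ its $\mathcal M$-wide shadow is $\mathcal W\cap\mathcal M$; $\mathrm{widshad}_{\mathcal M}(\Gamma)$ is the poset of all $\mathcal M$-wide shadows ordered by inclusion. *)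

theory Defs
  imports "Jordan_Normal_Form.Matrix"
begin

text \<open>A finite-dimensional algebra over a field 'k is modelled as a ring type with unit
  together with a central unital ring homomorphism iota from 'k (the structure map),
  such that the algebra is spanned over 'k by a finite set.\<close>

definition fd_algebra :: "('k::field \<Rightarrow> 'g::{ring,monoid_mult}) \<Rightarrow> bool" where
  "fd_algebra \<iota> \<longleftrightarrow>
     (\<forall>a b. \<iota> (a + b) = \<iota> a + \<iota> b) \<and> (\<forall>a b. \<iota> (a * b) = \<iota> a * \<iota> b) \<and> \<iota> 1 = 1 \<and>
     (\<forall>a g. \<iota> a * g = g * \<iota> a) \<and>
     (\<exists>B. finite B \<and> (\<forall>g. \<exists>c. g = (\<Sum>b\<in>B. \<iota> (c b) * b)))"

definition alg_epi :: "('k::field \<Rightarrow> 'g::{ring,monoid_mult}) \<Rightarrow> ('k \<Rightarrow> 'l::{ring,monoid_mult})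
     \<Rightarrow> ('g \<Rightarrow> 'l) \<Rightarrow> bool" where
  "alg_epi \<iota>G \<iota>L \<phi> \<longleftrightarrow>
     (\<forall>a b. \<phi> (a + b) = \<phi> a + \<phi> b) \<and> (\<forall>a b. \<phi> (a * b) = \<phi> a * \<phi> b) \<and> \<phi> 1 = 1 \<and>
     (\<forall>c. \<phi> (\<iota>G c) = \<iota>L c) \<and> surj \<phi>"

text \<open>A finitely generated (= finite-dimensional over 'k) left module of dimension n,
  given by its representation: an algebra homomorphism into n x n matrices over 'k.\<close>
definition is_rep :: "('k::field \<Rightarrow> 'g::{ring,monoid_mult}) \<Rightarrow> nat \<Rightarrow> ('g \<Rightarrow> 'k mat) \<Rightarrow> bool" where
  "is_rep \<iota> n \<rho> \<longleftrightarrow>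
     (\<forall>g. \<rho> g \<in> carrier_mat n n) \<and>
     (\<forall>a b. \<rho> (a + b) = \<rho> a + \<rho> b) \<and> (\<forall>a b. \<rho> (a * b) = \<rho> a * \<rho> b) \<and>
     \<rho> 1 = 1\<^sub>m n \<and> (\<forall>c. \<rho> (\<iota> c) = c \<cdot>\<^sub>m 1\<^sub>m n)"

definition mods :: "('k::field \<Rightarrow> 'g::{ring,monoid_mult}) \<Rightarrow> ('g \<Rightarrow> 'k mat) set" where
  "mods \<iota> = {\<rho>. \<exists>n. is_rep \<iota> n \<rho>}"

definition rdim :: "('g::{ring,monoid_mult} \<Rightarrow> 'k::field mat) \<Rightarrow> nat" where
  "rdim \<rho> = dim_row (\<rho> 1)"

definition is_hom :: "('g::{ring,monoid_mult} \<Rightarrow> 'k::field mat) \<Rightarrow> ('g \<Rightarrow> 'k mat) \<Rightarrow> 'k mat \<Rightarrow> bool" where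
  "is_hom \<rho> \<sigma> F \<longleftrightarrow> F \<in> carrier_mat (rdim \<sigma>) (rdim \<rho>) \<and> (\<forall>g. F * \<rho> g = \<sigma> g * F)"

definition is_iso :: "('g::{ring,monoid_mult} \<Rightarrow> 'k::field mat) \<Rightarrow> ('g \<Rightarrow> 'k mat) \<Rightarrow> 'k mat \<Rightarrow> bool" where
  "is_iso \<rho> \<sigma> F \<longleftrightarrow> is_hom \<rho> \<sigma> F \<and>
     (\<exists>G. is_hom \<sigma> \<rho> G \<and> G * F = 1\<^sub>m (rdim \<rho>) \<and> F * G = 1\<^sub>m (rdim \<sigma>))"

definition mono_mat :: "'k::field mat \<Rightarrow> bool" where
  "mono_mat F \<longleftrightarrow> (\<forall>v\<in>carrier_vec (dim_col F). F *\<^sub>v v = 0\<^sub>v (dim_row F) \<longrightarrow> v = 0\<^sub>v (dim_col F))"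

definition epi_mat :: "'k::field mat \<Rightarrow> bool" where
  "epi_mat F \<longleftrightarrow> (\<forall>w\<in>carrier_vec (dim_row F). \<exists>v\<in>carrier_vec (dim_col F). F *\<^sub>v v = w)"

definition exact_at :: "'k::field mat \<Rightarrow> 'k mat \<Rightarrow> bool" where
  "exact_at f g \<longleftrightarrow> (\<forall>v\<in>carrier_vec (dim_col g).
      g *\<^sub>v v = 0\<^sub>v (dim_row g) \<longleftrightarrow> (\<exists>u\<in>carrier_vec (dim_col f). v = f *\<^sub>v u))"

text \<open>Subcategories: full (so given by their objects) and closed under isomorphism.\<close>
definition subcat :: "('k::field \<Rightarrow> 'g::{ring,monoid_mult}) \<Rightarrow> ('g \<Rightarrow> 'k mat) set \<Rightarrow> bool" where
  "subcat \<iota> S \<longleftrightarrow> S \<subseteq> mods \<iota> \<and>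
     (\<forall>\<rho>\<in>S. \<forall>\<sigma>\<in>mods \<iota>. (\<exists>F. is_iso \<rho> \<sigma> F) \<longrightarrow> \<sigma> \<in> S)"

definition closed_kernels :: "('k::field \<Rightarrow> 'g::{ring,monoid_mult}) \<Rightarrow> ('g \<Rightarrow> 'k mat) set \<Rightarrow> bool" where
  "closed_kernels \<iota> S \<longleftrightarrow> (\<forall>M\<in>S. \<forall>N\<in>S. \<forall>f K i. K \<in> mods \<iota> \<and> is_hom M N f \<and> is_hom K M i \<and>
      mono_mat i \<and> exact_at i f \<longrightarrow> K \<in> S)"

definition closed_cokernels :: "('k::field \<Rightarrow> 'g::{ring,monoid_mult}) \<Rightarrow> ('g \<Rightarrow> 'k mat) set \<Rightarrow> bool" where
  "closed_cokernels \<iota> S \<longleftrightarrow> (\<forall>M\<in>S. \<forall>N\<in>S. \<forall>f C p. C \<in> mods \<iota> \<and> is_hom M N f \<and> is_hom N C p \<and>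
      epi_mat p \<and> exact_at f p \<longrightarrow> C \<in> S)"

definition closed_extensions :: "('k::field \<Rightarrow> 'g::{ring,monoid_mult}) \<Rightarrow> ('g \<Rightarrow> 'k mat) set \<Rightarrow> bool" where
  "closed_extensions \<iota> S \<longleftrightarrow> (\<forall>A\<in>S. \<forall>C\<in>S. \<forall>B f g. B \<in> mods \<iota> \<and> is_hom A B f \<and> is_hom B C g \<and>
      mono_mat f \<and> epi_mat g \<and> exact_at f g \<longrightarrow> B \<in> S)"

text \<open>Wide subcategories: nonempty (an abelian category has a zero object), closed under
  kernels, cokernels and extensions.\<close>
definition wide :: "('k::field \<Rightarrow> 'g::{ring,monoid_mult}) \<Rightarrow> ('g \<Rightarrow> 'k mat) set \<Rightarrow> bool" where
  "wide \<iota> S \<longleftrightarrow> subcat \<iota> S \<and> S \<noteq> {} \<and> closed_kernels \<iota> S \<and> closed_cokernels \<iota> S \<and>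
     closed_extensions \<iota> S"

definition wideset :: "('k::field \<Rightarrow> 'g::{ring,monoid_mult}) \<Rightarrow> ('g \<Rightarrow> 'k mat) set set" where
  "wideset \<iota> = {S. wide \<iota> S}"

definition widshad :: "('k::field \<Rightarrow> 'g::{ring,monoid_mult}) \<Rightarrow> ('g \<Rightarrow> 'k mat) set
     \<Rightarrow> ('g \<Rightarrow> 'k mat) set set" where
  "widshad \<iota> M = {W \<inter> M | W. wide \<iota> W}"

text \<open>(-) intersected with mod(Lambda), viewed as a subcategory of mod(Lambda) via phi.\<close>
definition res_mod :: "('g \<Rightarrow> 'l) \<Rightarrow> ('k::field \<Rightarrow> 'l::{ring,monoid_mult}) \<Rightarrow> ('g \<Rightarrow> 'k mat) set
     \<Rightarrow> ('l \<Rightarrow> 'k mat) set" where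
  "res_mod \<phi> \<iota>L S = {\<sigma> \<in> mods \<iota>L. \<sigma> \<circ> \<phi> \<in> S}"

definition is_lub :: "'a set set \<Rightarrow> 'a set set \<Rightarrow> 'a set \<Rightarrow> bool" where
  "is_lub P A s \<longleftrightarrow> s \<in> P \<and> (\<forall>a\<in>A. a \<subseteq> s) \<and> (\<forall>t\<in>P. (\<forall>a\<in>A. a \<subseteq> t) \<longrightarrow> s \<subseteq> t)"

definition is_glb :: "'a set set \<Rightarrow> 'a set set \<Rightarrow> 'a set \<Rightarrow> bool" where
  "is_glb P A s \<longleftrightarrow> s \<in> P \<and> (\<forall>a\<in>A. s \<subseteq> a) \<and> (\<forall>t\<in>P. (\<forall>a\<in>A. t \<subseteq> a) \<longrightarrow> t \<subseteq> s)"

definition complete_lattice_poset :: "'a set set \<Rightarrow> bool" where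
  "complete_lattice_poset P \<longleftrightarrow> (\<forall>A \<subseteq> P. (\<exists>s. is_lub P A s) \<and> (\<exists>s. is_glb P A s))"

definition meet_semilattice_poset :: "'a set set \<Rightarrow> bool" where
  "meet_semilattice_poset P \<longleftrightarrow> (\<forall>x\<in>P. \<forall>y\<in>P. \<exists>z. is_glb P {x, y} z)"

definition meet_semilattice_map :: "'a set set \<Rightarrow> 'b set set \<Rightarrow> ('a set \<Rightarrow> 'b set) \<Rightarrow> bool" where
  "meet_semilattice_map P Q f \<longleftrightarrow> meet_semilattice_poset P \<and> meet_semilattice_poset Q \<and>
     (\<forall>x\<in>P. f x \<in> Q) \<and>
     (\<forall>x\<in>P. \<forall>y\<in>P. \<forall>z. is_glb P {x, y} z \<longrightarrow> is_glb Q {f x, f y} (f z))"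

end

theory Submission
  imports Defs "Jordan_Normal_Form.DL_Rank" "Jordan_Normal_Form.Matrix_Kernel" "Jordan_Normal_Form.Determinant"
begin


lemma mat_unit_vec: fixes A :: "'k::field mat" assumes "A \<in> carrier_mat m n" "j < n"
  shows "A *\<^sub>v unit_vec n j = col A j"
proof -
  have "col (A * 1\<^sub>m n) j = A *\<^sub>v col (1\<^sub>m n) j" using assms by (intro col_mult2) auto
  moreover have "A * 1\<^sub>m n = A" using assms(1) by (rule right_mult_one_mat)
  ultimately show ?thesis using assms by simp
qed

lemma vec_minus_eq0: fixes v :: "'k::field vec"
  assumes "v - w = 0\<^sub>v n" "v \<in> carrier_vec n" "w \<in> carrier_vec n" shows "v = w"
proof (rule eq_vecI)
  fix i assume i: "i < dim_vec w"
  have i': "i < n" using i assms by auto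
  have "(v - w) $ i = 0" using assms i' by simp
  moreover have "(v - w) $ i = v $ i - w $ i" using assms(2,3) i' by simp
  ultimately show "v $ i = w $ i" by simp
qed (insert assms, auto)

lemma mono_cancel:
  fixes f :: "'k::field mat"
  assumes mo: "mono_mat f" and f: "f \<in> carrier_mat m n" and A: "A \<in> carrier_mat n k"
    and B: "B \<in> carrier_mat n k" and eq: "f * A = f * B"
  shows "A = B"
proof (rule mat_col_eqI)
  fix j assume j0: "j < dim_col B"
  then have j: "j < k" using B by auto
  have cA: "col A j \<in> carrier_vec n" "col B j \<in> carrier_vec n" using A B by auto
  have "f *\<^sub>v (col A j - col B j) = f *\<^sub>v col A j - f *\<^sub>v col B j"
    using f cA by (rule mult_minus_distrib_mat_vec)
  also have "f *\<^sub>v col A j = col (f * A) j" using f A j by (simp only: col_mult2)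
  also have "f *\<^sub>v col B j = col (f * B) j" using f B j by (simp only: col_mult2)
  also have "col (f * A) j - col (f * B) j = 0\<^sub>v m" unfolding eq
    using f B j by (intro minus_cancel_vec) auto
  finally have z: "f *\<^sub>v (col A j - col B j) = 0\<^sub>v m" .
  have "col A j - col B j \<in> carrier_vec (dim_col f)" using cA f by auto
  moreover have "f *\<^sub>v (col A j - col B j) = 0\<^sub>v (dim_row f)" using z f by simp
  ultimately have "col A j - col B j = 0\<^sub>v (dim_col f)" using mo unfolding mono_mat_def by blast
  then have "col A j - col B j = 0\<^sub>v n" using f by simp
  then show "col A j = col B j" by (rule vec_minus_eq0[OF _ cA])
qed (insert A B, auto)

lemma epi_cancel:
  fixes g :: "'k::field mat"
  assumes ep: "epi_mat g" and g: "g \<in> carrier_mat m n" and A: "A \<in> carrier_mat k m"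
    and B: "B \<in> carrier_mat k m" and eq: "A * g = B * g"
  shows "A = B"
proof (rule mat_col_eqI)
  fix j assume j: "j < dim_col B"
  then have jm: "j < m" using B by auto
  obtain v where v: "v \<in> carrier_vec n" "g *\<^sub>v v = unit_vec m j"
    using ep g jm unfolding epi_mat_def by (metis carrier_matD unit_vec_carrier)
  have "col A j = A *\<^sub>v (g *\<^sub>v v)" using v mat_unit_vec[OF A jm] by simp
  also have "\<dots> = (A * g) *\<^sub>v v" using A g v by simp
  also have "\<dots> = (B * g) *\<^sub>v v" using eq by simp
  also have "\<dots> = B *\<^sub>v (g *\<^sub>v v)" using B g v by simp
  also have "\<dots> = col B j" using v mat_unit_vec[OF B jm] by simp
  finally show "col A j = col B j" .
qed (insert A B, auto)

lemma mat_minus_eq0: fixes A :: "'k::field mat" assumes "A - B = 0\<^sub>m k m" "A \<in> carrier_mat k m" "B \<in> carrier_mat k m"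
  shows "A = B"
proof (rule eq_matI)
  fix i j assume ij: "i < dim_row B" "j < dim_col B"
  have "(A - B) $$ (i,j) = 0" using assms ij by simp
  moreover have "(A - B) $$ (i,j) = A $$ (i,j) - B $$ (i,j)" using assms ij by (intro index_minus_mat) auto
  ultimately show "A $$ (i,j) = B $$ (i,j)" using assms ij by simp
qed (insert assms, auto)

lemma col_factor:
  fixes i :: "'k::field mat"
  assumes i: "i \<in> carrier_mat n d" and h: "h \<in> carrier_mat n k"
    and cols: "\<And>j. j < k \<Longrightarrow> \<exists>u\<in>carrier_vec d. col h j = i *\<^sub>v u"
  shows "\<exists>h'\<in>carrier_mat d k. h = i * h'"
proof -
  from cols have "\<forall>j. \<exists>u. j < k \<longrightarrow> u \<in> carrier_vec d \<and> col h j = i *\<^sub>v u" by blast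
  then obtain U where U: "\<And>j. j < k \<Longrightarrow> U j \<in> carrier_vec d \<and> col h j = i *\<^sub>v U j"
    by metis
  define h' where "h' = mat_of_cols d (map U [0..<k])"
  have h': "h' \<in> carrier_mat d k" unfolding h'_def using mat_of_cols_carrier(1)[of d "map U [0..<k]"] by simp
  have "h = i * h'"
  proof (rule mat_col_eqI)
    fix j assume "j < dim_col (i * h')"
    then have j: "j < k" using h' by simp
    have "col (i * h') j = i *\<^sub>v col h' j" using i h' j by (simp only: col_mult2)
    also have "col h' j = U j" unfolding h'_def using j U by simp
    finally show "col h j = col (i * h') j" using U j by simp
  qed (insert i h h', auto)
  then show ?thesis using h' by blast
qed

lemma epi_right_inverse:
  fixes p :: "'k::field mat"
  assumes p: "p \<in> carrier_mat e m" and ep: "epi_mat p"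
  shows "\<exists>R\<in>carrier_mat m e. p * R = 1\<^sub>m e"
proof -
  have "\<exists>h'\<in>carrier_mat m e. 1\<^sub>m e = p * h'"
  proof (rule col_factor[OF p])
    fix j assume j: "j < e"
    show "\<exists>u\<in>carrier_vec m. col (1\<^sub>m e) j = p *\<^sub>v u"
      using ep p j unfolding epi_mat_def by (metis carrier_matD col_one unit_vec_carrier)
  qed simp
  then show ?thesis by metis
qed

lemma ker_factor:
  fixes f :: "'k::field mat"
  assumes f: "f \<in> carrier_mat m n" and i: "i \<in> carrier_mat n d" and ex: "exact_at i f"
    and h: "h \<in> carrier_mat n k" and z: "f * h = 0\<^sub>m m k"
  shows "\<exists>h'\<in>carrier_mat d k. h = i * h'"
proof (rule col_factor[OF i h])
  fix j assume j: "j < k"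
  have "f *\<^sub>v col h j = col (f * h) j" using f h j by (simp only: col_mult2)
  also have "\<dots> = 0\<^sub>v m" using z j by simp
  finally show "\<exists>u\<in>carrier_vec d. col h j = i *\<^sub>v u"
    using ex f i h j unfolding exact_at_def by auto
qed

lemma exact_zero:
  fixes f :: "'k::field mat"
  assumes f: "f \<in> carrier_mat m n" and g: "g \<in> carrier_mat l m" and ex: "exact_at f g"
  shows "g * f = 0\<^sub>m l n"
proof (rule mat_col_eqI)
  fix j assume "j < dim_col (0\<^sub>m l n)"
  then have j: "j < n" by simp
  have "col (g * f) j = g *\<^sub>v (f *\<^sub>v unit_vec n j)" using f g j mat_unit_vec[OF f j] by (simp only: col_mult2)
  also have "\<dots> = 0\<^sub>v l" using ex f g j unfolding exact_at_def by auto
  finally show "col (g * f) j = col (0\<^sub>m l n) j" using j by simp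
qed (insert f g, auto)

lemma coker_factor:
  fixes f :: "'k::field mat"
  assumes f: "f \<in> carrier_mat m n" and p: "p \<in> carrier_mat e m" and ep: "epi_mat p"
    and ex: "exact_at f p"
    and h: "h \<in> carrier_mat k m" and z: "h * f = 0\<^sub>m k n"
  shows "\<exists>h'\<in>carrier_mat k e. h = h' * p"
proof -
  obtain R where R: "R \<in> carrier_mat m e" "p * R = 1\<^sub>m e" using epi_right_inverse[OF p ep] by blast
  define D where "D = 1\<^sub>m m - R * p"
  have D: "D \<in> carrier_mat m m" unfolding D_def using R p by auto
  have "p * D = p * 1\<^sub>m m - p * (R * p)" unfolding D_def using p R
    by (intro mult_minus_distrib_mat) auto
  also have "p * (R * p) = (p * R) * p" by (rule assoc_mult_mat[OF p R(1) p, symmetric])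
  also have "(p * R) * p = p" unfolding R(2) using p by (rule left_mult_one_mat)
  also have "p * 1\<^sub>m m = p" using p by (rule right_mult_one_mat)
  finally have pD: "p * D = 0\<^sub>m e m" using p by (simp only: minus_r_inv_mat)
  have ex2: "exact_at f p" by fact
  obtain Z where Z: "Z \<in> carrier_mat n m" "D = f * Z"
  proof -
    have "\<exists>Z\<in>carrier_mat n m. D = f * Z"
    proof (rule col_factor[OF f D])
      fix j assume j: "j < m"
      have "p *\<^sub>v col D j = col (p * D) j" using p D j by (simp only: col_mult2)
      also have "\<dots> = 0\<^sub>v e" using pD j by simp
      finally show "\<exists>u\<in>carrier_vec n. col D j = f *\<^sub>v u"
        using ex f p D j unfolding exact_at_def by auto
    qed
    then show ?thesis using that by blast
  qed
  have "h * D = h * (f * Z)" using Z by simp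
  also have "\<dots> = (h * f) * Z" using h f Z by (simp add: assoc_mult_mat)
  also have "\<dots> = 0\<^sub>m k m" using z Z by simp
  finally have hD: "h * D = 0\<^sub>m k m" .
  have "h * D = h * 1\<^sub>m m - h * (R * p)" unfolding D_def using h R p
    by (intro mult_minus_distrib_mat) auto
  then have "h - h * (R * p) = 0\<^sub>m k m" using hD h by simp
  moreover have "h * (R * p) \<in> carrier_mat k m" using h R p by auto
  ultimately have "h = h * (R * p)" using h by (intro mat_minus_eq0[of h "h * (R * p)" k m]) auto
  also have "\<dots> = (h * R) * p" using h R p by (simp add: assoc_mult_mat)
  finally show ?thesis using h R by (intro bexI[of _ "h * R"]) auto
qed




lemma kernel_exists:
  fixes f :: "'k::field mat"
  assumes f: "f \<in> carrier_mat m n"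
  shows "\<exists>d i. i \<in> carrier_mat n d \<and> mono_mat i \<and> exact_at i f"
proof -
  obtain B where B: "finite B" "kernel.basis n f B" using kernel_basis_exists[OF f] by blast
  interpret K: kernel m n f by (unfold_locales, rule f)

  have Bk: "B \<subseteq> mat_kernel f" and li: "K.lin_indpt B" and sp: "K.span B = mat_kernel f"
    using B(2) unfolding K.Ker.basis_def by auto
  have Bc: "B \<subseteq> carrier_vec n" using Bk mat_kernel[OF f] by auto
  have li': "\<not> K.NC.lin_dep B" using li K.lindep_same[OF Bk] by simp
  have sp': "K.NC.span B = mat_kernel f" using sp K.span_same[OF Bk] by simp
  obtain xs where xs: "set xs = B" "distinct xs" using finite_distinct_list[OF B(1)] by blast
  define i where "i = mat_of_cols n xs"
  have i: "i \<in> carrier_mat n (length xs)" unfolding i_def by simp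
  have ci: "cols i = xs" unfolding i_def using xs Bc by simp
  have mono: "mono_mat i" unfolding mono_mat_def
  proof (intro ballI impI)
    fix v assume v: "v \<in> carrier_vec (dim_col i)" and z: "i *\<^sub>v v = 0\<^sub>v (dim_row i)"
    show "v = 0\<^sub>v (dim_col i)"
    proof (rule ccontr)
      assume "v \<noteq> 0\<^sub>v (dim_col i)"
      then have "K.NC.lin_dep (set (cols i))"
        using K.NC.lin_depI[OF i, of v] v z i ci xs by auto
      then show False using li' ci xs by simp
    qed
  qed
  have exact: "exact_at i f" unfolding exact_at_def
  proof (intro ballI)
    fix v :: "'k vec" assume v: "v \<in> carrier_vec (dim_col f)"
    then have vn: "v \<in> carrier_vec n" using f by auto
    show "(f *\<^sub>v v = 0\<^sub>v (dim_row f)) = (\<exists>u\<in>carrier_vec (dim_col i). v = i *\<^sub>v u)"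
    proof
      assume "f *\<^sub>v v = 0\<^sub>v (dim_row f)"
      then have "v \<in> mat_kernel f" using vn f by (auto intro: mat_kernelI)
      then have "v \<in> K.NC.span B" using sp' by simp
      then obtain a where a: "K.NC.lincomb a B = v"
        using K.NC.finite_in_span[OF B(1)] Bc by auto
      have "i *\<^sub>v vec (length xs) (\<lambda>j. a (col i j)) = K.NC.lincomb a (set (cols i))"
        using K.NC.mat_mult_eq_lincomb[OF i] ci xs by simp
      then show "\<exists>u\<in>carrier_vec (dim_col i). v = i *\<^sub>v u" using a ci xs i
        by (intro bexI[of _ "vec (length xs) (\<lambda>j. a (col i j))"]) auto
    next
      assume "\<exists>u\<in>carrier_vec (dim_col i). v = i *\<^sub>v u"
      then obtain u where u: "u \<in> carrier_vec (length xs)" "v = i *\<^sub>v u" using i by auto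
      have "K.NC.lincomb (\<lambda>a. u $ find_first a (cols i)) (set (cols i)) = i *\<^sub>v u"
        using K.NC.lincomb_eq_mat_mult[OF i u(1)] ci xs by simp
      then have "v \<in> K.NC.span B" using u ci xs Bc K.NC.finite_span[OF B(1)] by (auto intro!: exI[of _ "\<lambda>a. u $ find_first a (cols i)"])
      then have "v \<in> mat_kernel f" using sp' by simp
      then show "f *\<^sub>v v = 0\<^sub>v (dim_row f)" using mat_kernelD[OF f] f by auto
    qed
  qed
  show ?thesis using i mono exact by blast
qed



lemma delta_sum: fixes c m :: nat assumes "c < m"
  shows "(\<Sum>b\<in>{0..<m}. (if b = c then 1 else 0) * (g b :: 'k::field)) = g c"
proof -
  have "(\<Sum>b\<in>{0..<m}. (if b = c then 1 else 0) * g b) = (\<Sum>b\<in>{0..<m}. if b = c then g b else 0)"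
    by (intro sum.cong) auto
  also have "\<dots> = g c" using assms by (subst sum.delta) auto
  finally show ?thesis .
qed

lemma delta_sum': fixes c m :: nat assumes "c < m"
  shows "(\<Sum>b\<in>{0..<m}. (g b :: 'k::field) * (if b = c then 1 else 0)) = g c"
  using delta_sum[OF assms, of g] by (simp add: mult.commute)

definition selmat :: "nat \<Rightarrow> nat \<Rightarrow> 'k::field mat" where
  "selmat r m = mat (m - r) m (\<lambda>(a,b). if b = r + a then 1 else 0)"

lemma selmat_carrier: "selmat r m \<in> carrier_mat (m - r) m"
  unfolding selmat_def by simp

lemma selmat_vec: fixes x :: "'k::field vec" assumes x: "x \<in> carrier_vec m"
  shows "selmat r m *\<^sub>v x = vec (m - r) (\<lambda>a. x $ (r + a))"
proof (rule eq_vecI)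
  fix a assume "a < dim_vec (vec (m - r) (\<lambda>a. x $ (r + a)))"
  then have a: "a < m - r" by simp
  have "dim_row (selmat r m :: 'k mat) = m - r" by (simp add: selmat_def)
  then have "(selmat r m *\<^sub>v x) $ a = row (selmat r m) a \<bullet> x" using a by simp
  also have "\<dots> = (\<Sum>b\<in>{0..<m}. (if b = r + a then 1 else 0) * x $ b)"
    unfolding scalar_prod_def using x a by (intro sum.cong) (auto simp: selmat_def)
  also have "\<dots> = x $ (r + a)" using a by (intro delta_sum) auto
  finally show "(selmat r m *\<^sub>v x) $ a = vec (m - r) (\<lambda>a. x $ (r + a)) $ a" using a by simp
qed (simp add: selmat_def)

lemma cokernel_exists:
  fixes f :: "'k::field mat"
  assumes f: "f \<in> carrier_mat m n"
  shows "\<exists>e p. p \<in> carrier_mat e m \<and> epi_mat p \<and> exact_at f p"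
proof -
  obtain C where gj: "gauss_jordan_single f = C" by auto
  note G = gauss_jordan_single[OF f gj]
  obtain P Q where CP: "C = P * f" and P: "P \<in> carrier_mat m m" and Q: "Q \<in> carrier_mat m m"
    and PQ: "P * Q = 1\<^sub>m m" and QP: "Q * P = 1\<^sub>m m" using G(4) by blast
  have Cc: "C \<in> carrier_mat m n" by (rule G(2))
  then have dC: "dim_row C = m" "dim_col C = n" by auto
  from G(3) obtain pf where piv: "pivot_fun C pf n" unfolding row_echelon_form_def using dC by auto
  note pD = pivot_funD[OF dC(1) piv]
  have mono: "pf i' = n" if "i \<le> i'" "i' < m" "pf i = n" for i i'
  proof -
    have "i + (i' - i) < m" using that by simp
    from pivot_bound[OF dC(1) piv this] have "pf i' = n \<or> pf i' \<ge> (i' - i) + pf i" using that by simp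
    then show ?thesis using pD(1)[OF that(2)] that by auto
  qed
  define r where "r = (LEAST i. i = m \<or> pf i = n)"
  have rm: "r \<le> m" unfolding r_def by (rule Least_le) simp
  have rchar: "pf i = n \<longleftrightarrow> r \<le> i" if i: "i < m" for i
  proof
    assume "pf i = n" then show "r \<le> i" unfolding r_def by (intro Least_le) simp
  next
    assume ri: "r \<le> i"
    have "r = m \<or> pf r = n" unfolding r_def by (rule LeastI[of _ m]) simp
    then show "pf i = n" using ri i mono[of r i] by auto
  qed
  have zero_row: "C $$ (i, j) = 0" if "r \<le> i" "i < m" "j < n" for i j
    using pD(2)[OF that(2)] rchar[OF that(2)] that by auto
  have piv_lt: "pf i < n" if "i < r" for i
    using pD(1)[of i] rchar[of i] that rm by fastforce
  have piv1: "C $$ (i', pf i) = (if i' = i then 1 else 0)" if "i < r" "i' < m" for i i'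
    using pD(4)[of i] pD(5)[of i i'] piv_lt[OF that(1)] that rm by auto
  define S :: "'k mat" where "S = selmat r m"
  have S: "S \<in> carrier_mat (m - r) m" unfolding S_def by (rule selmat_carrier)
  define p where "p = S * P"
  have p: "p \<in> carrier_mat (m - r) m" unfolding p_def using S P by auto
  have pw: "p *\<^sub>v w = vec (m - r) (\<lambda>a. (P *\<^sub>v w) $ (r + a))" if w: "w \<in> carrier_vec m" for w
  proof -
    have "p *\<^sub>v w = S *\<^sub>v (P *\<^sub>v w)" unfolding p_def by (rule assoc_mult_mat_vec[OF S P w])
    then show ?thesis unfolding S_def using selmat_vec[of "P *\<^sub>v w" m r] P w by simp
  qed
  have epi: "epi_mat p" unfolding epi_mat_def
  proof
    fix z :: "'k vec" assume "z \<in> carrier_vec (dim_row p)"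
    then have z: "z \<in> carrier_vec (m - r)" using p by auto
    define x where "x = vec m (\<lambda>i. if r \<le> i then z $ (i - r) else 0)"
    have x: "x \<in> carrier_vec m" unfolding x_def by simp
    have "P *\<^sub>v (Q *\<^sub>v x) = x" using P Q x PQ by (metis assoc_mult_mat_vec one_mult_mat_vec)
    then have "p *\<^sub>v (Q *\<^sub>v x) = z" using pw[of "Q *\<^sub>v x"] Q x z unfolding x_def
      by (intro eq_vecI) auto
    then show "\<exists>v\<in>carrier_vec (dim_col p). p *\<^sub>v v = z" using p Q x
      by (intro bexI[of _ "Q *\<^sub>v x"]) auto
  qed
  have exact: "exact_at f p" unfolding exact_at_def
  proof (intro ballI)
    fix w :: "'k vec" assume "w \<in> carrier_vec (dim_col p)"
    then have w: "w \<in> carrier_vec m" using p by auto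
    show "(p *\<^sub>v w = 0\<^sub>v (dim_row p)) = (\<exists>u\<in>carrier_vec (dim_col f). w = f *\<^sub>v u)"
    proof
      assume pz: "p *\<^sub>v w = 0\<^sub>v (dim_row p)"
      define x where "x = P *\<^sub>v w"
      have x: "x \<in> carrier_vec m" unfolding x_def using P w by auto
      have xz: "x $ i = 0" if "r \<le> i" "i < m" for i
      proof -
        have "(p *\<^sub>v w) $ (i - r) = 0" using pz that p by simp
        moreover have "r + (i - r) = i" using that by simp
        ultimately show ?thesis using pw[OF w] that unfolding x_def by simp
      qed
      define E :: "'k mat" where "E = mat n r (\<lambda>(j,i). if j = pf i then 1 else 0)"
      have E: "E \<in> carrier_mat n r" unfolding E_def by simp
      define xr where "xr = vec r (\<lambda>i. x $ i)"
      have xr: "xr \<in> carrier_vec r" unfolding xr_def by simp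
      have CE: "C * E = mat m r (\<lambda>(i',i). if i' = i then 1 else 0)"
      proof (rule eq_matI)
        fix i' i assume ii: "i' < dim_row (mat m r (\<lambda>(i',i). if i' = i then 1 else (0::'k)))"
          "i < dim_col (mat m r (\<lambda>(i',i). if i' = i then 1 else (0::'k)))"
        then have ii: "i' < m" "i < r" by auto
        have "(C * E) $$ (i', i) = row C i' \<bullet> col E i" using Cc E ii by simp
        also have "\<dots> = (\<Sum>j\<in>{0..<n}. C $$ (i', j) * (if j = pf i then 1 else 0))"
          unfolding scalar_prod_def using Cc E ii by (intro sum.cong) (auto simp: E_def)
        also have "\<dots> = C $$ (i', pf i)" using piv_lt[OF ii(2)] by (rule delta_sum')
        finally show "(C * E) $$ (i', i) = mat m r (\<lambda>(i',i). if i' = i then 1 else (0::'k)) $$ (i', i)"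
          using piv1[OF ii(2) ii(1)] ii by simp
      qed (insert Cc E, auto)
      define u where "u = E *\<^sub>v xr"
      have u: "u \<in> carrier_vec n" unfolding u_def using E xr by simp
      have Cu: "C *\<^sub>v u = x"
      proof -
        have "C *\<^sub>v u = (C * E) *\<^sub>v xr" unfolding u_def using Cc E xr by simp
        also have "\<dots> = x"
        proof (rule eq_vecI)
          fix i' assume "i' < dim_vec x" then have i': "i' < m" using x by simp
          have "((C * E) *\<^sub>v xr) $ i' = row (C * E) i' \<bullet> xr" using i' CE by simp
          also have "\<dots> = (\<Sum>i\<in>{0..<r}. (if i = i' then 1 else 0) * x $ i)"
            unfolding scalar_prod_def CE using i' xr by (intro sum.cong) (auto simp: xr_def)
          also have "\<dots> = x $ i'"
          proof (cases "i' < r")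
            case True then show ?thesis by (rule delta_sum)
          next
            case False then show ?thesis using xz[of i'] i' by simp
          qed
          finally show "((C * E) *\<^sub>v xr) $ i' = x $ i'" .
        qed (insert CE x, auto)
        finally show ?thesis .
      qed
      have "w = Q *\<^sub>v x" unfolding x_def using Q P w QP by (metis assoc_mult_mat_vec one_mult_mat_vec)
      also have "\<dots> = Q *\<^sub>v (P *\<^sub>v (f *\<^sub>v u))" unfolding Cu[symmetric] CP using P f u by simp
      also have "\<dots> = f *\<^sub>v u" using Q P f u QP
        by (metis assoc_mult_mat_vec mult_mat_vec_carrier one_mult_mat_vec)
      finally show "\<exists>u\<in>carrier_vec (dim_col f). w = f *\<^sub>v u" using u f by auto
    next
      assume "\<exists>u\<in>carrier_vec (dim_col f). w = f *\<^sub>v u"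
      then obtain u where u: "u \<in> carrier_vec n" and wu: "w = f *\<^sub>v u" using f by auto
      have Pw: "P *\<^sub>v w = C *\<^sub>v u" unfolding wu CP using P f u by simp
      show "p *\<^sub>v w = 0\<^sub>v (dim_row p)"
      proof (rule eq_vecI)
        fix a assume "a < dim_vec (0\<^sub>v (dim_row p) :: 'k vec)"
        then have a: "a < m - r" using p by simp
        have "(p *\<^sub>v w) $ a = (C *\<^sub>v u) $ (r + a)" using pw[OF w] a Pw by simp
        also have "\<dots> = row C (r + a) \<bullet> u" using Cc a by simp
        also have "\<dots> = 0" unfolding scalar_prod_def using zero_row[of "r + a"] a u Cc
          by (intro sum.neutral) auto
        finally show "(p *\<^sub>v w) $ a = 0\<^sub>v (dim_row p) $ a" using a p by simp
      qed (insert p, auto)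
    qed
  qed
  show ?thesis using p epi exact by blast
qed



lemma mat_vec_zero: fixes A :: "'k::field mat" assumes "A \<in> carrier_mat m n"
  shows "A *\<^sub>v 0\<^sub>v n = 0\<^sub>v m"
  by (rule eq_vecI) (insert assms, auto simp: scalar_prod_def)

lemma square_mono_inv:
  fixes a :: "'k::field mat"
  assumes a: "a \<in> carrier_mat n n" and mo: "mono_mat a"
  shows "\<exists>B\<in>carrier_mat n n. a * B = 1\<^sub>m n \<and> B * a = 1\<^sub>m n"
proof -
  have "det a \<noteq> 0"
  proof
    assume "det a = 0"
    then obtain v where v: "v \<in> carrier_vec n" "v \<noteq> 0\<^sub>v n" "a *\<^sub>v v = 0\<^sub>v n"
      using det_0_iff_vec_prod_zero[OF a] by blast
    then show False using mo a unfolding mono_mat_def by auto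
  qed
  from det_non_zero_imp_unit[OF a this, of undefined]
  show ?thesis unfolding Units_def ring_mat_def by auto
qed

lemma square_mono_epi:
  fixes a :: "'k::field mat"
  assumes a: "a \<in> carrier_mat n n" and mo: "mono_mat a"
  shows "epi_mat a"
proof -
  obtain B where B: "B \<in> carrier_mat n n" "a * B = 1\<^sub>m n" using square_mono_inv[OF a mo] by blast
  show ?thesis unfolding epi_mat_def
  proof
    fix w :: "'k vec" assume "w \<in> carrier_vec (dim_row a)"
    then have w: "w \<in> carrier_vec n" using a by auto
    have "a *\<^sub>v (B *\<^sub>v w) = w" using a B w by (metis assoc_mult_mat_vec one_mult_mat_vec)
    then show "\<exists>v\<in>carrier_vec (dim_col a). a *\<^sub>v v = w" using B a w
      by (intro bexI[of _ "B *\<^sub>v w"]) auto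
  qed
qed

lemma square_epi_mono:
  fixes p :: "'k::field mat"
  assumes p: "p \<in> carrier_mat n n" and ep: "epi_mat p"
  shows "mono_mat p"
proof -
  obtain R where R: "R \<in> carrier_mat n n" "p * R = 1\<^sub>m n" using epi_right_inverse[OF p ep] by blast
  have Rp: "R * p = 1\<^sub>m n" using mat_mult_left_right_inverse[OF p R(1) R(2)] .
  show ?thesis unfolding mono_mat_def
  proof (intro ballI impI)
    fix v :: "'k vec" assume v: "v \<in> carrier_vec (dim_col p)" and z: "p *\<^sub>v v = 0\<^sub>v (dim_row p)"
    have vn: "v \<in> carrier_vec n" using v p by auto
    have "v = R *\<^sub>v (p *\<^sub>v v)" using R p vn Rp by (metis assoc_mult_mat_vec one_mult_mat_vec)
    also have "\<dots> = 0\<^sub>v n" using z p R mat_vec_zero[OF R(1)] by simp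
    finally show "v = 0\<^sub>v (dim_col p)" using p by simp
  qed
qed

lemma mono_le:
  fixes a :: "'k::field mat"
  assumes a: "a \<in> carrier_mat \<beta> \<alpha>" and mo: "mono_mat a"
  shows "\<alpha> \<le> \<beta>"
proof (rule ccontr)
  assume "\<not> \<alpha> \<le> \<beta>"
  then have lt: "\<beta> < \<alpha>" by simp
  define a' :: "'k mat" where "a' = mat \<alpha> \<alpha> (\<lambda>(r,c). if r < \<beta> then a $$ (r,c) else 0)"
  have a': "a' \<in> carrier_mat \<alpha> \<alpha>" unfolding a'_def by simp
  have mo': "mono_mat a'" unfolding mono_mat_def
  proof (intro ballI impI)
    fix v :: "'k vec" assume v: "v \<in> carrier_vec (dim_col a')" and z: "a' *\<^sub>v v = 0\<^sub>v (dim_row a')"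
    have va: "v \<in> carrier_vec \<alpha>" using v a' by auto
    have "a *\<^sub>v v = 0\<^sub>v \<beta>"
    proof (rule eq_vecI)
      fix r assume "r < dim_vec (0\<^sub>v \<beta> :: 'k vec)"
      then have r: "r < \<beta>" by simp
      have "(a *\<^sub>v v) $ r = row a r \<bullet> v" using a r by simp
      also have "\<dots> = row a' r \<bullet> v" unfolding scalar_prod_def using a a' r lt va
        by (intro sum.cong) (auto simp: a'_def)
      also have "\<dots> = (a' *\<^sub>v v) $ r" using a' r lt by simp
      also have "\<dots> = 0" using z a' r lt by simp
      finally show "(a *\<^sub>v v) $ r = 0\<^sub>v \<beta> $ r" using r by simp
    qed (insert a, auto)
    then have "v = 0\<^sub>v \<alpha>" using mo a va unfolding mono_mat_def by auto
    then show "v = 0\<^sub>v (dim_col a')" using a' by simp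
  qed
  obtain B where B: "B \<in> carrier_mat \<alpha> \<alpha>" "a' * B = 1\<^sub>m \<alpha>" using square_mono_inv[OF a' mo'] by blast
  have "row (a' * B) \<beta> = 0\<^sub>v \<alpha>"
  proof (rule eq_vecI)
    fix c assume "c < dim_vec (0\<^sub>v \<alpha> :: 'k vec)"
    then have c: "c < \<alpha>" by simp
    have "row (a' * B) \<beta> $ c = row a' \<beta> \<bullet> col B c" using a' B(1) c lt by simp
    also have "\<dots> = 0" unfolding scalar_prod_def using a' B(1) c lt by (intro sum.neutral) (auto simp: a'_def)
    finally show "row (a' * B) \<beta> $ c = 0\<^sub>v \<alpha> $ c" using c by simp
  qed (insert a' B, auto)
  moreover have "row (1\<^sub>m \<alpha> :: 'k mat) \<beta> $ \<beta> = 1" using lt by simp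
  ultimately show False using B(2) lt by simp
qed

lemma epi_le:
  fixes p :: "'k::field mat"
  assumes p: "p \<in> carrier_mat \<gamma> \<beta>" and ep: "epi_mat p"
  shows "\<gamma> \<le> \<beta>"
proof -
  obtain R where R: "R \<in> carrier_mat \<beta> \<gamma>" "p * R = 1\<^sub>m \<gamma>" using epi_right_inverse[OF p ep] by blast
  have "mono_mat R" unfolding mono_mat_def
  proof (intro ballI impI)
    fix v :: "'k vec" assume v: "v \<in> carrier_vec (dim_col R)" and z: "R *\<^sub>v v = 0\<^sub>v (dim_row R)"
    have vn: "v \<in> carrier_vec \<gamma>" using v R by auto
    have "v = p *\<^sub>v (R *\<^sub>v v)" using R p vn by (metis assoc_mult_mat_vec one_mult_mat_vec)
    also have "\<dots> = 0\<^sub>v \<gamma>" using z p R mat_vec_zero[OF p] by simp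
    finally show "v = 0\<^sub>v (dim_col R)" using R by simp
  qed
  then show ?thesis using mono_le[OF R(1)] by simp
qed




lemma is_rep_carrier: "is_rep \<iota> n \<rho> \<Longrightarrow> \<rho> g \<in> carrier_mat n n"
  unfolding is_rep_def by auto

lemma is_rep_rdim: "is_rep \<iota> n \<rho> \<Longrightarrow> rdim \<rho> = n"
  unfolding is_rep_def rdim_def by auto

lemma mods_rep: "\<rho> \<in> mods \<iota> \<Longrightarrow> is_rep \<iota> (rdim \<rho>) \<rho>"
  unfolding mods_def using is_rep_rdim by fastforce

lemma rep_mods: "is_rep \<iota> n \<rho> \<Longrightarrow> \<rho> \<in> mods \<iota>"
  unfolding mods_def by auto

lemma rep_from_mono:
  fixes \<iota> :: "'k::field \<Rightarrow> 'a::{ring,monoid_mult}"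
  assumes X: "is_rep \<iota> n X" and i: "i \<in> carrier_mat n d" and mo: "mono_mat i"
    and K: "\<And>g. K g \<in> carrier_mat d d" and KX: "\<And>g. X g * i = i * K g"
  shows "is_rep \<iota> d K"
proof -
  note Xc = is_rep_carrier[OF X]
  note XX = X[unfolded is_rep_def]
  have add: "K (a + b) = K a + K b" for a b
  proof (rule mono_cancel[OF mo i K])
    have "i * K (a + b) = X (a + b) * i" using KX by simp
    also have "\<dots> = (X a + X b) * i" using XX by simp
    also have "\<dots> = X a * i + X b * i" by (rule add_mult_distrib_mat[OF Xc Xc i])
    also have "\<dots> = i * K a + i * K b" using KX by simp
    also have "\<dots> = i * (K a + K b)" by (rule mult_add_distrib_mat[OF i K K, symmetric])
    finally show "i * K (a + b) = i * (K a + K b)" .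
    show "K a + K b \<in> carrier_mat d d" using K by simp
  qed
  have mult: "K (a * b) = K a * K b" for a b
  proof (rule mono_cancel[OF mo i K])
    have "i * K (a * b) = X (a * b) * i" using KX by simp
    also have "\<dots> = (X a * X b) * i" using XX by simp
    also have "\<dots> = X a * (X b * i)" by (rule assoc_mult_mat[OF Xc Xc i])
    also have "\<dots> = X a * (i * K b)" using KX by simp
    also have "\<dots> = (X a * i) * K b" by (rule assoc_mult_mat[OF Xc i K, symmetric])
    also have "\<dots> = (i * K a) * K b" using KX by simp
    also have "\<dots> = i * (K a * K b)" by (rule assoc_mult_mat[OF i K K])
    finally show "i * K (a * b) = i * (K a * K b)" .
    show "K a * K b \<in> carrier_mat d d" by (rule mult_carrier_mat[OF K K])
  qed
  have one: "K 1 = 1\<^sub>m d"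
  proof (rule mono_cancel[OF mo i K])
    have "i * K 1 = X 1 * i" using KX by simp
    also have "\<dots> = i" using XX i by simp
    also have "\<dots> = i * 1\<^sub>m d" using i by simp
    finally show "i * K 1 = i * 1\<^sub>m d" .
  qed simp
  have sm: "K (\<iota> c) = c \<cdot>\<^sub>m 1\<^sub>m d" for c
  proof (rule mono_cancel[OF mo i K])
    have "i * K (\<iota> c) = X (\<iota> c) * i" using KX by simp
    also have "\<dots> = (c \<cdot>\<^sub>m 1\<^sub>m n) * i" using XX by simp
    also have "\<dots> = c \<cdot>\<^sub>m (1\<^sub>m n * i)" using i by (intro mult_smult_assoc_mat) auto
    also have "\<dots> = c \<cdot>\<^sub>m (i * 1\<^sub>m d)" using i by simp
    also have "\<dots> = i * (c \<cdot>\<^sub>m 1\<^sub>m d)" using i by (intro mult_smult_distrib[symmetric]) auto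
    finally show "i * K (\<iota> c) = i * (c \<cdot>\<^sub>m 1\<^sub>m d)" .
  qed simp
  show ?thesis unfolding is_rep_def using K add mult one sm by blast
qed

lemma rep_from_epi:
  fixes \<iota> :: "'k::field \<Rightarrow> 'a::{ring,monoid_mult}"
  assumes Y: "is_rep \<iota> m Y" and p: "p \<in> carrier_mat e m" and ep: "epi_mat p"
    and C: "\<And>g. C g \<in> carrier_mat e e" and CY: "\<And>g. C g * p = p * Y g"
  shows "is_rep \<iota> e C"
proof -
  note Yc = is_rep_carrier[OF Y]
  note YY = Y[unfolded is_rep_def]
  have add: "C (a + b) = C a + C b" for a b
  proof (rule epi_cancel[OF ep p C])
    have "C (a + b) * p = p * Y (a + b)" using CY by simp
    also have "\<dots> = p * (Y a + Y b)" using YY by simp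
    also have "\<dots> = p * Y a + p * Y b" by (rule mult_add_distrib_mat[OF p Yc Yc])
    also have "\<dots> = C a * p + C b * p" using CY by simp
    also have "\<dots> = (C a + C b) * p" by (rule add_mult_distrib_mat[OF C C p, symmetric])
    finally show "C (a + b) * p = (C a + C b) * p" .
    show "C a + C b \<in> carrier_mat e e" using C by simp
  qed
  have mult: "C (a * b) = C a * C b" for a b
  proof (rule epi_cancel[OF ep p C])
    have "C (a * b) * p = p * Y (a * b)" using CY by simp
    also have "\<dots> = p * (Y a * Y b)" using YY by simp
    also have "\<dots> = (p * Y a) * Y b" by (rule assoc_mult_mat[OF p Yc Yc, symmetric])
    also have "\<dots> = (C a * p) * Y b" using CY by simp
    also have "\<dots> = C a * (p * Y b)" by (rule assoc_mult_mat[OF C p Yc])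
    also have "\<dots> = C a * (C b * p)" using CY by simp
    also have "\<dots> = (C a * C b) * p" by (rule assoc_mult_mat[OF C C p, symmetric])
    finally show "C (a * b) * p = (C a * C b) * p" .
    show "C a * C b \<in> carrier_mat e e" by (rule mult_carrier_mat[OF C C])
  qed
  have one: "C 1 = 1\<^sub>m e"
  proof (rule epi_cancel[OF ep p C])
    have "C 1 * p = p * Y 1" using CY by simp
    also have "\<dots> = p" using YY p by simp
    also have "\<dots> = 1\<^sub>m e * p" using p by simp
    finally show "C 1 * p = 1\<^sub>m e * p" .
  qed simp
  have sm: "C (\<iota> c) = c \<cdot>\<^sub>m 1\<^sub>m e" for c
  proof (rule epi_cancel[OF ep p C])
    have "C (\<iota> c) * p = p * Y (\<iota> c)" using CY by simp
    also have "\<dots> = p * (c \<cdot>\<^sub>m 1\<^sub>m m)" using YY by simp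
    also have "\<dots> = c \<cdot>\<^sub>m (p * 1\<^sub>m m)" using p by (intro mult_smult_distrib) auto
    also have "\<dots> = c \<cdot>\<^sub>m (1\<^sub>m e * p)" using p by simp
    also have "\<dots> = (c \<cdot>\<^sub>m 1\<^sub>m e) * p" using p by (intro mult_smult_assoc_mat[symmetric]) auto
    finally show "C (\<iota> c) * p = (c \<cdot>\<^sub>m 1\<^sub>m e) * p" .
  qed simp
  show ?thesis unfolding is_rep_def using C add mult one sm by blast
qed

lemma kernel_rep:
  fixes \<iota> :: "'k::field \<Rightarrow> 'a::{ring,monoid_mult}"
  assumes X: "X \<in> mods \<iota>" and Y: "Y \<in> mods \<iota>" and f: "is_hom X Y f"
  shows "\<exists>K i. K \<in> mods \<iota> \<and> is_hom K X i \<and> mono_mat i \<and> exact_at i f"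
proof -
  define n where "n = rdim X"
  define m where "m = rdim Y"
  have Xr: "is_rep \<iota> n X" and Yr: "is_rep \<iota> m Y" unfolding n_def m_def using mods_rep X Y by auto
  note Xc = is_rep_carrier[OF Xr] and Yc = is_rep_carrier[OF Yr]
  have fc: "f \<in> carrier_mat m n" and fX: "\<And>g. f * X g = Y g * f"
    using f unfolding is_hom_def n_def m_def by auto
  obtain d i where i: "i \<in> carrier_mat n d" and mo: "mono_mat i" and ex: "exact_at i f"
    using kernel_exists[OF fc] by blast
  have fi: "f * i = 0\<^sub>m m d" using exact_zero[OF i fc ex] .
  have "\<exists>Z. Z \<in> carrier_mat d d \<and> X g * i = i * Z" for g
  proof -
    have "f * (X g * i) = (f * X g) * i" by (rule assoc_mult_mat[OF fc Xc i, symmetric])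
    also have "\<dots> = (Y g * f) * i" using fX by simp
    also have "\<dots> = Y g * (f * i)" by (rule assoc_mult_mat[OF Yc fc i])
    also have "\<dots> = 0\<^sub>m m d" using fi right_mult_zero_mat[OF Yc] by simp
    finally have "f * (X g * i) = 0\<^sub>m m d" .
    from ker_factor[OF fc i ex mult_carrier_mat[OF Xc i] this] show ?thesis by auto
  qed
  then obtain K where K: "\<And>g. K g \<in> carrier_mat d d" and KX: "\<And>g. X g * i = i * K g" by metis
  have Kr: "is_rep \<iota> d K" by (rule rep_from_mono[OF Xr i mo K KX])
  have "is_hom K X i" unfolding is_hom_def using is_rep_rdim[OF Kr] i KX n_def by auto
  then show ?thesis using rep_mods[OF Kr] mo ex by blast
qed

lemma cokernel_rep:
  fixes \<iota> :: "'k::field \<Rightarrow> 'a::{ring,monoid_mult}"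
  assumes X: "X \<in> mods \<iota>" and Y: "Y \<in> mods \<iota>" and f: "is_hom X Y f"
  shows "\<exists>C p. C \<in> mods \<iota> \<and> is_hom Y C p \<and> epi_mat p \<and> exact_at f p"
proof -
  define n where "n = rdim X"
  define m where "m = rdim Y"
  have Xr: "is_rep \<iota> n X" and Yr: "is_rep \<iota> m Y" unfolding n_def m_def using mods_rep X Y by auto
  note Xc = is_rep_carrier[OF Xr] and Yc = is_rep_carrier[OF Yr]
  have fc: "f \<in> carrier_mat m n" and fX: "\<And>g. f * X g = Y g * f"
    using f unfolding is_hom_def n_def m_def by auto
  obtain e p where p: "p \<in> carrier_mat e m" and ep: "epi_mat p" and ex: "exact_at f p"
    using cokernel_exists[OF fc] by blast
  have pf: "p * f = 0\<^sub>m e n" using exact_zero[OF fc p ex] .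
  have "\<exists>Z. Z \<in> carrier_mat e e \<and> p * Y g = Z * p" for g
  proof -
    have "(p * Y g) * f = p * (Y g * f)" by (rule assoc_mult_mat[OF p Yc fc])
    also have "\<dots> = p * (f * X g)" using fX by simp
    also have "\<dots> = (p * f) * X g" by (rule assoc_mult_mat[OF p fc Xc, symmetric])
    also have "\<dots> = 0\<^sub>m e n" using pf left_mult_zero_mat[OF Xc] by simp
    finally have "(p * Y g) * f = 0\<^sub>m e n" .
    from coker_factor[OF fc p ep ex mult_carrier_mat[OF p Yc] this] show ?thesis by auto
  qed
  then obtain C where C: "\<And>g. C g \<in> carrier_mat e e" and CY: "\<And>g. p * Y g = C g * p" by metis
  have Cr: "is_rep \<iota> e C" by (rule rep_from_epi[OF Yr p ep C]) (simp add: CY)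
  have "is_hom Y C p" unfolding is_hom_def using is_rep_rdim[OF Cr] p CY m_def by auto
  then show ?thesis using rep_mods[OF Cr] ep ex by blast
qed



definition zrep :: "'a \<Rightarrow> 'k::field mat" where "zrep = (\<lambda>_. 1\<^sub>m 0)"

lemma mat00: "(A :: 'k mat) \<in> carrier_mat 0 0 \<Longrightarrow> B \<in> carrier_mat 0 0 \<Longrightarrow> A = B"
  by (rule eq_matI) auto

lemma zrep_rep: "is_rep \<iota> 0 zrep"
  unfolding is_rep_def zrep_def by (auto intro: mat00)

lemma zrep_mods: "zrep \<in> mods \<iota>"
  using zrep_rep rep_mods by blast

lemma zrep_rdim: "rdim zrep = 0"
  unfolding rdim_def zrep_def by simp

lemma wide_zero:
  fixes \<iota> :: "'k::field \<Rightarrow> 'a::{ring,monoid_mult}"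
  assumes w: "wide \<iota> S" shows "zrep \<in> S"
proof -
  from w obtain \<rho> where \<rho>: "\<rho> \<in> S" unfolding wide_def by auto
  have \<rho>m: "\<rho> \<in> mods \<iota>" using \<rho> w unfolding wide_def subcat_def by auto
  define n where "n = rdim \<rho>"
  have \<rho>r: "is_rep \<iota> n \<rho>" unfolding n_def using mods_rep[OF \<rho>m] .
  note \<rho>c = is_rep_carrier[OF \<rho>r]
  have \<rho>d: "dim_row (\<rho> g) = n" "dim_col (\<rho> g) = n" for g using \<rho>c[of g] by auto
  define i :: "'k mat" where "i = 0\<^sub>m n 0"
  have "1\<^sub>m n * \<rho> g = \<rho> g * 1\<^sub>m n" for g
    using left_mult_one_mat[OF \<rho>c[of g]] right_mult_one_mat[OF \<rho>c[of g]] by simp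
  then have hom_id: "is_hom \<rho> \<rho> (1\<^sub>m n)" unfolding is_hom_def by (simp add: n_def)
  have hom_i: "is_hom zrep \<rho> i" unfolding is_hom_def zrep_rdim i_def n_def
    using \<rho>d unfolding n_def by (auto intro!: eq_matI simp: zrep_def)
  have mo: "mono_mat i" unfolding mono_mat_def i_def by (auto intro!: eq_vecI)
  have ex: "exact_at i (1\<^sub>m n)" unfolding exact_at_def i_def
  proof (intro ballI)
    fix v :: "'k vec" assume v: "v \<in> carrier_vec (dim_col (1\<^sub>m n :: 'k mat))"
    then have vn: "v \<in> carrier_vec n" by simp
    have "0\<^sub>m n 0 *\<^sub>v u = 0\<^sub>v n" if "u \<in> carrier_vec 0" for u :: "'k vec"
      by (rule eq_vecI) (insert that, auto simp: scalar_prod_def)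
    moreover have "(0\<^sub>v 0 :: 'k vec) \<in> carrier_vec 0" by simp
    ultimately show "(1\<^sub>m n *\<^sub>v v = 0\<^sub>v (dim_row (1\<^sub>m n :: 'k mat))) =
      (\<exists>u\<in>carrier_vec (dim_col (0\<^sub>m n 0 :: 'k mat)). v = 0\<^sub>m n 0 *\<^sub>v u)"
      using vn by (metis carrier_vecD index_one_mat(2) index_zero_mat(3) one_mult_mat_vec)
  qed
  show ?thesis using w \<rho> zrep_mods hom_id hom_i mo ex
    unfolding wide_def closed_kernels_def by blast
qed

lemma wide_inter:
  fixes \<iota> :: "'k::field \<Rightarrow> 'a::{ring,monoid_mult}"
  assumes F: "\<And>W. W \<in> F \<Longrightarrow> wide \<iota> W"
  shows "wide \<iota> (mods \<iota> \<inter> \<Inter>F)"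
proof -
  let ?S = "mods \<iota> \<inter> \<Inter>F"
  have sc: "subcat \<iota> ?S" unfolding subcat_def
  proof (intro conjI ballI impI)
    fix \<rho> \<sigma> assume \<rho>: "\<rho> \<in> ?S" and \<sigma>: "\<sigma> \<in> mods \<iota>" and iso: "\<exists>G. is_iso \<rho> \<sigma> G"
    have "\<sigma> \<in> W" if "W \<in> F" for W using F[OF that] \<rho> \<sigma> iso that unfolding wide_def subcat_def by blast
    then show "\<sigma> \<in> ?S" using \<sigma> by blast
  qed auto
  have ne: "?S \<noteq> {}" using zrep_mods wide_zero F by blast
  have ck: "closed_kernels \<iota> ?S" unfolding closed_kernels_def
  proof (intro ballI allI impI)
    fix M N f K i assume "M \<in> ?S" "N \<in> ?S"
      "K \<in> mods \<iota> \<and> is_hom M N f \<and> is_hom K M i \<and> mono_mat i \<and> exact_at i f"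
    then show "K \<in> ?S" using F unfolding wide_def closed_kernels_def by blast
  qed
  have cc: "closed_cokernels \<iota> ?S" unfolding closed_cokernels_def
  proof (intro ballI allI impI)
    fix M N f C p assume "M \<in> ?S" "N \<in> ?S"
      "C \<in> mods \<iota> \<and> is_hom M N f \<and> is_hom N C p \<and> epi_mat p \<and> exact_at f p"
    then show "C \<in> ?S" using F unfolding wide_def closed_cokernels_def by blast
  qed
  have ce: "closed_extensions \<iota> ?S" unfolding closed_extensions_def
  proof (intro ballI allI impI)
    fix A C B f g assume "A \<in> ?S" "C \<in> ?S"
      "B \<in> mods \<iota> \<and> is_hom A B f \<and> is_hom B C g \<and> mono_mat f \<and> epi_mat g \<and> exact_at f g"
    then show "B \<in> ?S" using F unfolding wide_def closed_extensions_def by blast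
  qed
  show ?thesis unfolding wide_def using sc ne ck cc ce by blast
qed

lemma wide_sub: "wide \<iota> W \<Longrightarrow> W \<subseteq> mods \<iota>"
  unfolding wide_def subcat_def by auto

lemma wide_Int2:
  fixes \<iota> :: "'k::field \<Rightarrow> 'a::{ring,monoid_mult}"
  assumes "wide \<iota> x" "wide \<iota> y" shows "wide \<iota> (x \<inter> y)"
proof -
  have "wide \<iota> (mods \<iota> \<inter> \<Inter>{x, y})" using assms by (intro wide_inter) auto
  moreover have "mods \<iota> \<inter> \<Inter>{x, y} = x \<inter> y" using wide_sub[OF assms(1)] by auto
  ultimately show ?thesis by simp
qed

lemma glb_unique: "is_glb P {x, y} z \<Longrightarrow> x \<inter> y \<in> P \<Longrightarrow> z = x \<inter> y"
  unfolding is_glb_def by auto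

lemma glb_Int: "x \<inter> y \<in> P \<Longrightarrow> is_glb P {x, y} (x \<inter> y)"
  unfolding is_glb_def by auto

lemma meet_poset_Int: "(\<And>x y. x \<in> P \<Longrightarrow> y \<in> P \<Longrightarrow> x \<inter> y \<in> P) \<Longrightarrow> meet_semilattice_poset P"
  unfolding meet_semilattice_poset_def using glb_Int by blast



locale epi_ctx =
  fixes \<iota>G :: "'k::field \<Rightarrow> 'g::{ring,monoid_mult}"
    and \<iota>L :: "'k \<Rightarrow> 'l::{ring,monoid_mult}"
    and \<phi> :: "'g \<Rightarrow> 'l"
  assumes epi: "alg_epi \<iota>G \<iota>L \<phi>"
begin

lemma phi_add: "\<phi> (a + b) = \<phi> a + \<phi> b" using epi unfolding alg_epi_def by blast
lemma phi_mult: "\<phi> (a * b) = \<phi> a * \<phi> b" using epi unfolding alg_epi_def by blast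
lemma phi_one: "\<phi> 1 = 1" using epi unfolding alg_epi_def by blast
lemma phi_iota: "\<phi> (\<iota>G c) = \<iota>L c" using epi unfolding alg_epi_def by blast
lemma phi_surj: "surj \<phi>" using epi unfolding alg_epi_def by blast

lemma pull_rep: "is_rep \<iota>L n \<sigma> \<Longrightarrow> is_rep \<iota>G n (\<sigma> \<circ> \<phi>)"
  unfolding is_rep_def by (simp add: phi_add phi_mult phi_one phi_iota)

lemma pull_mods: "\<sigma> \<in> mods \<iota>L \<Longrightarrow> \<sigma> \<circ> \<phi> \<in> mods \<iota>G"
  unfolding mods_def using pull_rep by blast

lemma pull_rdim: "rdim (\<sigma> \<circ> \<phi>) = rdim \<sigma>"
  unfolding rdim_def by (simp add: phi_one)

lemma pull_hom: "is_hom (\<sigma> \<circ> \<phi>) (\<tau> \<circ> \<phi>) F \<longleftrightarrow> is_hom \<sigma> \<tau> F"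
proof -
  have "(\<forall>g. F * \<sigma> (\<phi> g) = \<tau> (\<phi> g) * F) \<longleftrightarrow> (\<forall>l. F * \<sigma> l = \<tau> l * F)"
    using phi_surj by (metis surjD)
  then show ?thesis unfolding is_hom_def pull_rdim by simp
qed

lemma pull_iso: "is_iso (\<sigma> \<circ> \<phi>) (\<tau> \<circ> \<phi>) F \<longleftrightarrow> is_iso \<sigma> \<tau> F"
  unfolding is_iso_def pull_hom pull_rdim by simp

definition factors :: "('g \<Rightarrow> 'k mat) \<Rightarrow> bool" where
  "factors \<rho> \<longleftrightarrow> (\<forall>g g'. \<phi> g = \<phi> g' \<longrightarrow> \<rho> g = \<rho> g')"

lemma factors_pull: "factors (\<sigma> \<circ> \<phi>)" unfolding factors_def by simp

lemma descend:
  assumes r: "is_rep \<iota>G n \<rho>" and fa: "factors \<rho>"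
  shows "\<exists>\<sigma>. is_rep \<iota>L n \<sigma> \<and> \<rho> = \<sigma> \<circ> \<phi>"
proof -
  define \<sigma> where "\<sigma> l = \<rho> (SOME g. \<phi> g = l)" for l
  have \<sigma>\<phi>: "\<sigma> (\<phi> g) = \<rho> g" for g
  proof -
    have "\<phi> (SOME g'. \<phi> g' = \<phi> g) = \<phi> g" by (rule someI) simp
    then show ?thesis using fa unfolding \<sigma>_def factors_def by blast
  qed
  have \<sigma>eq: "\<rho> = \<sigma> \<circ> \<phi>" using \<sigma>\<phi> by auto
  have pre: "\<exists>g. \<phi> g = l" for l using phi_surj by (metis surjD)
  note R = r[unfolded is_rep_def]
  have "is_rep \<iota>L n \<sigma>" unfolding is_rep_def
  proof (intro conjI allI)
    fix l show "\<sigma> l \<in> carrier_mat n n" using pre[of l] \<sigma>\<phi> R by metis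
  next
    fix a b
    obtain ga gb where "\<phi> ga = a" "\<phi> gb = b" using pre by metis
    then show "\<sigma> (a + b) = \<sigma> a + \<sigma> b" "\<sigma> (a * b) = \<sigma> a * \<sigma> b"
      using \<sigma>\<phi>[of "ga + gb"] \<sigma>\<phi>[of "ga * gb"] \<sigma>\<phi>[of ga] \<sigma>\<phi>[of gb] R phi_add phi_mult by metis+
  next
    show "\<sigma> 1 = 1\<^sub>m n" using \<sigma>\<phi>[of 1] R phi_one by metis
  next
    fix c show "\<sigma> (\<iota>L c) = c \<cdot>\<^sub>m 1\<^sub>m n" using \<sigma>\<phi>[of "\<iota>G c"] R phi_iota by metis
  qed
  then show ?thesis using \<sigma>eq by blast
qed

lemma factors_sub:
  assumes h: "is_hom K X i" and K: "K \<in> mods \<iota>G" and mo: "mono_mat i" and fa: "factors X"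
  shows "factors K"
  unfolding factors_def
proof (intro allI impI)
  fix g g' assume e: "\<phi> g = \<phi> g'"
  have Kr: "is_rep \<iota>G (rdim K) K" by (rule mods_rep[OF K])
  have i: "i \<in> carrier_mat (rdim X) (rdim K)" using h unfolding is_hom_def by auto
  have "i * K g = X g * i" "i * K g' = X g' * i" using h unfolding is_hom_def by auto
  moreover have "X g = X g'" using fa e unfolding factors_def by blast
  ultimately have "i * K g = i * K g'" by simp
  then show "K g = K g'" using mono_cancel[OF mo i is_rep_carrier[OF Kr] is_rep_carrier[OF Kr]] by blast
qed

lemma factors_quot:
  assumes h: "is_hom X C p" and C: "C \<in> mods \<iota>G" and ep: "epi_mat p" and fa: "factors X"
  shows "factors C"
  unfolding factors_def
proof (intro allI impI)
  fix g g' assume e: "\<phi> g = \<phi> g'"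
  have Cr: "is_rep \<iota>G (rdim C) C" by (rule mods_rep[OF C])
  have p: "p \<in> carrier_mat (rdim C) (rdim X)" using h unfolding is_hom_def by auto
  have "p * X g = C g * p" "p * X g' = C g' * p" using h unfolding is_hom_def by auto
  moreover have "X g = X g'" using fa e unfolding factors_def by blast
  ultimately have "C g * p = C g' * p" by simp
  then show "C g = C g'" using epi_cancel[OF ep p is_rep_carrier[OF Cr] is_rep_carrier[OF Cr]] by blast
qed

lemma descend_mods:
  assumes "\<rho> \<in> mods \<iota>G" "factors \<rho>"
  shows "\<exists>\<sigma>\<in>mods \<iota>L. \<rho> = \<sigma> \<circ> \<phi>"
  using descend[OF mods_rep[OF assms(1)] assms(2)] rep_mods by blast

lemma zrep_pull: "zrep \<circ> \<phi> = zrep" unfolding zrep_def by auto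

end



lemma hom_carrier: "is_hom X Y f \<Longrightarrow> f \<in> carrier_mat (rdim Y) (rdim X)"
  unfolding is_hom_def by auto

lemma hom_eq: "is_hom X Y f \<Longrightarrow> f * X g = Y g * f"
  unfolding is_hom_def by auto

lemma mods_carrier: "X \<in> mods \<iota> \<Longrightarrow> X g \<in> carrier_mat (rdim X) (rdim X)"
  using is_rep_carrier[OF mods_rep] by blast

lemma hom_comp:
  fixes \<iota> :: "'k::field \<Rightarrow> 'a::{ring,monoid_mult}"
  assumes X: "X \<in> mods \<iota>" and Y: "Y \<in> mods \<iota>" and Z: "Z \<in> mods \<iota>"
    and f: "is_hom X Y f" and g: "is_hom Y Z g"
  shows "is_hom X Z (g * f)"
proof -
  note fc = hom_carrier[OF f] and gc = hom_carrier[OF g]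
  note Xc = mods_carrier[OF X] and Yc = mods_carrier[OF Y] and Zc = mods_carrier[OF Z]
  have "(g * f) * X h = Z h * (g * f)" for h
  proof -
    have "(g * f) * X h = g * (f * X h)" by (rule assoc_mult_mat[OF gc fc Xc])
    also have "\<dots> = g * (Y h * f)" using hom_eq[OF f] by simp
    also have "\<dots> = (g * Y h) * f" by (rule assoc_mult_mat[OF gc Yc fc, symmetric])
    also have "\<dots> = (Z h * g) * f" using hom_eq[OF g] by simp
    also have "\<dots> = Z h * (g * f)" by (rule assoc_mult_mat[OF Zc gc fc])
    finally show ?thesis .
  qed
  then show ?thesis unfolding is_hom_def using fc gc by auto
qed

lemma monoD: "mono_mat i \<Longrightarrow> i \<in> carrier_mat r c \<Longrightarrow> v \<in> carrier_vec c \<Longrightarrow> i *\<^sub>v v = 0\<^sub>v r \<Longrightarrow> v = 0\<^sub>v c"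
  unfolding mono_mat_def by auto

lemma monoI: "i \<in> carrier_mat r c \<Longrightarrow> (\<And>v. v \<in> carrier_vec c \<Longrightarrow> i *\<^sub>v v = 0\<^sub>v r \<Longrightarrow> v = 0\<^sub>v c) \<Longrightarrow> mono_mat i"
  unfolding mono_mat_def by auto

lemma epiD: "epi_mat p \<Longrightarrow> p \<in> carrier_mat r c \<Longrightarrow> w \<in> carrier_vec r \<Longrightarrow> \<exists>v\<in>carrier_vec c. p *\<^sub>v v = w"
  unfolding epi_mat_def by auto

lemma epiI: "p \<in> carrier_mat r c \<Longrightarrow> (\<And>w. w \<in> carrier_vec r \<Longrightarrow> \<exists>v\<in>carrier_vec c. p *\<^sub>v v = w) \<Longrightarrow> epi_mat p"
  unfolding epi_mat_def by auto

lemma exactD1: "exact_at i f \<Longrightarrow> f \<in> carrier_mat m n \<Longrightarrow> i \<in> carrier_mat n d \<Longrightarrow> v \<in> carrier_vec n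
  \<Longrightarrow> f *\<^sub>v v = 0\<^sub>v m \<Longrightarrow> \<exists>u\<in>carrier_vec d. v = i *\<^sub>v u"
  unfolding exact_at_def by auto

lemma exactD2: "exact_at i f \<Longrightarrow> f \<in> carrier_mat m n \<Longrightarrow> i \<in> carrier_mat n d \<Longrightarrow> u \<in> carrier_vec d
  \<Longrightarrow> f *\<^sub>v (i *\<^sub>v u) = 0\<^sub>v m"
  unfolding exact_at_def by (metis carrier_matD mult_mat_vec_carrier)

lemma exactI: "f \<in> carrier_mat m n \<Longrightarrow> i \<in> carrier_mat n d
  \<Longrightarrow> (\<And>v. v \<in> carrier_vec n \<Longrightarrow> f *\<^sub>v v = 0\<^sub>v m \<Longrightarrow> \<exists>u\<in>carrier_vec d. v = i *\<^sub>v u)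
  \<Longrightarrow> (\<And>u. u \<in> carrier_vec d \<Longrightarrow> f *\<^sub>v (i *\<^sub>v u) = 0\<^sub>v m) \<Longrightarrow> exact_at i f"
  unfolding exact_at_def by auto

lemma mono_inj:
  fixes i :: "'k::field mat"
  assumes "mono_mat i" "i \<in> carrier_mat r c" "v \<in> carrier_vec c" "w \<in> carrier_vec c" "i *\<^sub>v v = i *\<^sub>v w"
  shows "v = w"
proof -
  have "i *\<^sub>v (v - w) = i *\<^sub>v v - i *\<^sub>v w" using assms by (intro mult_minus_distrib_mat_vec) auto
  also have "\<dots> = 0\<^sub>v r" using assms by simp
  finally have "v - w = 0\<^sub>v c" using monoD[OF assms(1,2)] assms by auto
  then show ?thesis using vec_minus_eq0[OF _ assms(3,4)] by simp
qed

lemma zero_dom_vec: "(a :: 'k::field mat) \<in> carrier_mat r 0 \<Longrightarrow> u \<in> carrier_vec 0 \<Longrightarrow> a *\<^sub>v u = 0\<^sub>v r"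
  by (rule eq_vecI) (auto simp: scalar_prod_def)

lemma zero_vec0: "(v :: 'k::field vec) \<in> carrier_vec 0 \<Longrightarrow> v = 0\<^sub>v 0"
  by (rule eq_vecI) auto

lemma iso_from_bij:
  fixes \<iota> :: "'k::field \<Rightarrow> 'a::{ring,monoid_mult}"
  assumes X: "X \<in> mods \<iota>" and Y: "Y \<in> mods \<iota>" and h: "is_hom X Y b"
    and mo: "mono_mat b" and ep: "epi_mat b"
  shows "is_iso X Y b"
proof -
  note bc = hom_carrier[OF h]
  have "rdim X \<le> rdim Y" using mono_le[OF bc mo] .
  moreover have "rdim Y \<le> rdim X" using epi_le[OF bc ep] .
  ultimately have eq: "rdim X = rdim Y" by simp
  have bs: "b \<in> carrier_mat (rdim Y) (rdim Y)" using bc eq by simp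
  obtain B where B: "B \<in> carrier_mat (rdim Y) (rdim Y)" "b * B = 1\<^sub>m (rdim Y)" "B * b = 1\<^sub>m (rdim Y)"
    using square_mono_inv[OF bs mo] by blast
  note Xc = mods_carrier[OF X] and Yc = mods_carrier[OF Y]
  have Xc': "X g \<in> carrier_mat (rdim Y) (rdim Y)" for g using Xc eq by simp
  have "B * Y g = X g * B" for g
  proof (rule mono_cancel[OF mo bs])
    show "B * Y g \<in> carrier_mat (rdim Y) (rdim Y)" using B(1) Yc by (metis mult_carrier_mat)
    show "X g * B \<in> carrier_mat (rdim Y) (rdim Y)" using B Xc' by (metis mult_carrier_mat)
    have "b * (B * Y g) = (b * B) * Y g" by (rule assoc_mult_mat[OF bs B(1) Yc, symmetric])
    also have "\<dots> = Y g" using B(2) left_mult_one_mat[OF Yc] by simp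
    also have "\<dots> = Y g * (b * B)" using B(2) right_mult_one_mat[OF Yc] by simp
    also have "\<dots> = (Y g * b) * B" by (rule assoc_mult_mat[OF Yc bs B(1), symmetric])
    also have "Y g * b = b * X g" using hom_eq[OF h] by simp
    also have "(b * X g) * B = b * (X g * B)" by (rule assoc_mult_mat[OF bs Xc' B(1)])
    finally show "b * (B * Y g) = b * (X g * B)" .
  qed
  then have "is_hom Y X B" unfolding is_hom_def using B eq by auto
  then show ?thesis unfolding is_iso_def using h B eq by auto
qed



locale filt_ctx = epi_ctx \<iota>G \<iota>L \<phi>
  for \<iota>G :: "'k::field \<Rightarrow> 'g::{ring,monoid_mult}"
    and \<iota>L :: "'k \<Rightarrow> 'l::{ring,monoid_mult}"
    and \<phi> :: "'g \<Rightarrow> 'l" +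
  fixes V :: "('l \<Rightarrow> 'k mat) set"
  assumes V: "wide \<iota>L V"
begin

inductive filt :: "('g \<Rightarrow> 'k mat) \<Rightarrow> bool" where
  base: "\<xi> \<in> V \<Longrightarrow> filt (\<xi> \<circ> \<phi>)"
| ext: "filt A \<Longrightarrow> filt C \<Longrightarrow> B \<in> mods \<iota>G \<Longrightarrow> is_hom A B a \<Longrightarrow> is_hom B C b \<Longrightarrow>
    mono_mat a \<Longrightarrow> epi_mat b \<Longrightarrow> exact_at a b \<Longrightarrow> 0 < rdim A \<Longrightarrow> 0 < rdim C \<Longrightarrow> filt B"

lemma V_mods: "V \<subseteq> mods \<iota>L" using wide_sub[OF V] .

lemma filt_mods: "filt X \<Longrightarrow> X \<in> mods \<iota>G"
proof (induction rule: filt.induct)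
  case (base \<xi>) then show ?case using V_mods pull_mods by blast
qed

lemma filt_iso: "filt X \<Longrightarrow> Y \<in> mods \<iota>G \<Longrightarrow> is_iso X Y F \<Longrightarrow> filt Y"
proof (induction X arbitrary: Y F rule: filt.induct)
  case (base \<xi>)
  have X: "\<xi> \<circ> \<phi> \<in> mods \<iota>G" using base V_mods pull_mods by auto
  from base(3) obtain G where F: "is_hom (\<xi> \<circ> \<phi>) Y F" and G: "is_hom Y (\<xi> \<circ> \<phi>) G"
    and FG: "F * G = 1\<^sub>m (rdim Y)" unfolding is_iso_def by auto
  note Fc = hom_carrier[OF F] and Gc = hom_carrier[OF G]
  note Xc = mods_carrier[OF X] and Yc = mods_carrier[OF base(2)]
  have Yg: "Y g = (F * (\<xi> \<circ> \<phi>) g) * G" for g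
  proof -
    have "Y g = Y g * (F * G)" using FG right_mult_one_mat[OF Yc] by simp
    also have "\<dots> = (Y g * F) * G" by (rule assoc_mult_mat[OF Yc Fc Gc, symmetric])
    also have "Y g * F = F * (\<xi> \<circ> \<phi>) g" using hom_eq[OF F] by simp
    finally show ?thesis .
  qed
  have "factors Y" unfolding factors_def
  proof (intro allI impI)
    fix g g' assume "\<phi> g = \<phi> g'"
    then show "Y g = Y g'" using Yg[of g] Yg[of g'] by simp
  qed
  then obtain \<eta> where \<eta>: "\<eta> \<in> mods \<iota>L" "Y = \<eta> \<circ> \<phi>" using descend_mods[OF base(2)] by blast
  have "is_iso (\<xi> \<circ> \<phi>) (\<eta> \<circ> \<phi>) F" using base(3) \<eta>(2) by (simp only:)
  then have "is_iso \<xi> \<eta> F" using pull_iso by blast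
  then have "\<eta> \<in> V" using V base(1) \<eta>(1) unfolding wide_def subcat_def by blast
  from filt.base[OF this] show ?case unfolding \<eta>(2) .
next
  case (ext A C B a b)
  from ext.prems(2) obtain G where F: "is_hom B Y F" and G: "is_hom Y B G"
    and GF: "G * F = 1\<^sub>m (rdim B)" and FG: "F * G = 1\<^sub>m (rdim Y)" unfolding is_iso_def by auto
  have A: "A \<in> mods \<iota>G" and C: "C \<in> mods \<iota>G" using filt_mods ext.hyps(1,2) by auto
  note Fc = hom_carrier[OF F] and Gc = hom_carrier[OF G]
  note ac = hom_carrier[OF ext.hyps(4)] and bc = hom_carrier[OF ext.hyps(5)]
  have h1: "is_hom A Y (F * a)" by (rule hom_comp[OF A ext.hyps(3) ext.prems(1) ext.hyps(4) F])
  have h2: "is_hom Y C (b * G)" by (rule hom_comp[OF ext.prems(1) ext.hyps(3) C G ext.hyps(5)])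
  have c1: "F * a \<in> carrier_mat (rdim Y) (rdim A)" using Fc ac by simp
  have c2: "b * G \<in> carrier_mat (rdim C) (rdim Y)" using Gc bc by simp
  have mo: "mono_mat (F * a)"
  proof (rule monoI[OF c1])
    fix v assume v: "v \<in> carrier_vec (rdim A)" and z: "(F * a) *\<^sub>v v = 0\<^sub>v (rdim Y)"
    have "a *\<^sub>v v = (G * F) *\<^sub>v (a *\<^sub>v v)" using GF ac v by simp
    also have "\<dots> = G *\<^sub>v ((F * a) *\<^sub>v v)" using Gc Fc ac v by simp
    also have "\<dots> = 0\<^sub>v (rdim B)" using z mat_vec_zero[OF Gc] by simp
    finally show "v = 0\<^sub>v (rdim A)" using monoD[OF ext.hyps(6) ac v] by simp
  qed
  have ep: "epi_mat (b * G)"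
  proof (rule epiI[OF c2])
    fix w :: "'k vec" assume w: "w \<in> carrier_vec (rdim C)"
    obtain v where v: "v \<in> carrier_vec (rdim B)" "b *\<^sub>v v = w" using epiD[OF ext.hyps(7) bc w] by blast
    have "(b * G) *\<^sub>v (F *\<^sub>v v) = b *\<^sub>v ((G * F) *\<^sub>v v)" using bc Gc Fc v by simp
    also have "\<dots> = w" using GF v by simp
    finally show "\<exists>v\<in>carrier_vec (rdim Y). (b * G) *\<^sub>v v = w" using Fc v by (intro bexI[of _ "F *\<^sub>v v"]) auto
  qed
  have ex: "exact_at (F * a) (b * G)"
  proof (rule exactI[OF c2 c1])
    fix y :: "'k vec" assume y: "y \<in> carrier_vec (rdim Y)" and z: "(b * G) *\<^sub>v y = 0\<^sub>v (rdim C)"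
    have "b *\<^sub>v (G *\<^sub>v y) = 0\<^sub>v (rdim C)" using z bc Gc y by simp
    moreover have Gy: "G *\<^sub>v y \<in> carrier_vec (rdim B)" using Gc y by simp
    ultimately obtain u where u: "u \<in> carrier_vec (rdim A)" "G *\<^sub>v y = a *\<^sub>v u"
      using exactD1[OF ext.hyps(8) bc ac Gy] by blast
    have "y = (F * G) *\<^sub>v y" using FG y by simp
    also have "\<dots> = F *\<^sub>v (a *\<^sub>v u)" using Fc Gc y u by simp
    also have "\<dots> = (F * a) *\<^sub>v u" using Fc ac u by simp
    finally show "\<exists>u\<in>carrier_vec (rdim A). y = (F * a) *\<^sub>v u" using u by blast
  next
    fix u :: "'k vec" assume u: "u \<in> carrier_vec (rdim A)"
    have "(b * G) *\<^sub>v ((F * a) *\<^sub>v u) = b *\<^sub>v ((G * F) *\<^sub>v (a *\<^sub>v u))" using bc Gc Fc ac u by simp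
    also have "\<dots> = b *\<^sub>v (a *\<^sub>v u)" using GF ac u by simp
    also have "\<dots> = 0\<^sub>v (rdim C)" using exactD2[OF ext.hyps(8) bc ac u] .
    finally show "(b * G) *\<^sub>v ((F * a) *\<^sub>v u) = 0\<^sub>v (rdim C)" .
  qed
  show ?case by (rule filt.ext[OF ext.hyps(1) ext.hyps(2) ext.prems(1) h1 h2 mo ep ex ext.hyps(9) ext.hyps(10)])
qed

lemma filt_ses:
  assumes A: "filt A" and C: "filt C" and B: "B \<in> mods \<iota>G" and a: "is_hom A B a" and b: "is_hom B C b"
    and mo: "mono_mat a" and ep: "epi_mat b" and ex: "exact_at a b"
  shows "filt B"
proof -
  have Am: "A \<in> mods \<iota>G" and Cm: "C \<in> mods \<iota>G" using filt_mods A C by auto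
  note ac = hom_carrier[OF a] and bc = hom_carrier[OF b]
  show ?thesis
  proof (cases "rdim A = 0")
    case True
    have "mono_mat b"
    proof (rule monoI[OF bc])
      fix v assume v: "v \<in> carrier_vec (rdim B)" and z: "b *\<^sub>v v = 0\<^sub>v (rdim C)"
      obtain u where u: "u \<in> carrier_vec (rdim A)" "v = a *\<^sub>v u" using exactD1[OF ex bc ac v z] by blast
      have ac0: "a \<in> carrier_mat (rdim B) 0" using ac True by simp
      have u0: "u \<in> carrier_vec 0" using u(1) True by simp
      show "v = 0\<^sub>v (rdim B)" using zero_dom_vec[OF ac0 u0] u(2) by simp
    qed
    then have "is_iso B C b" by (rule iso_from_bij[OF B Cm b _ ep])
    then obtain G where G: "is_hom C B G" "G * b = 1\<^sub>m (rdim B)" "b * G = 1\<^sub>m (rdim C)"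
      unfolding is_iso_def by auto
    have "is_iso C B G" unfolding is_iso_def using G b by blast
    then show ?thesis by (rule filt_iso[OF C B])
  next
    case A0: False
    show ?thesis
    proof (cases "rdim C = 0")
      case True
      have "epi_mat a"
      proof (rule epiI[OF ac])
        fix w :: "'k vec" assume w: "w \<in> carrier_vec (rdim B)"
        have "b *\<^sub>v w \<in> carrier_vec 0" using bc w True by simp
        then have "b *\<^sub>v w = 0\<^sub>v (rdim C)" using zero_vec0 True by simp
        then obtain u where u: "u \<in> carrier_vec (rdim A)" "w = a *\<^sub>v u" using exactD1[OF ex bc ac w] by blast
        then show "\<exists>v\<in>carrier_vec (rdim A). a *\<^sub>v v = w" by (intro bexI[of _ u]) auto
      qed
      then have "is_iso A B a" by (rule iso_from_bij[OF Am B a mo])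
      then show ?thesis by (rule filt_iso[OF A B])
    next
      case False
      then show ?thesis using A0 by (intro filt.ext[OF A C B a b mo ep ex]) auto
    qed
  qed
qed

lemma filt_descend: "filt X \<Longrightarrow> factors X \<Longrightarrow> \<exists>\<xi>\<in>V. X = \<xi> \<circ> \<phi>"
proof (induction rule: filt.induct)
  case (base \<xi>) then show ?case by blast
next
  case (ext A C B a b)
  have A: "A \<in> mods \<iota>G" and C: "C \<in> mods \<iota>G" using filt_mods ext.hyps(1,2) by auto
  have "factors A" using factors_sub[OF ext.hyps(4) A ext.hyps(6) ext.prems(1)] .
  then obtain \<alpha> where \<alpha>: "\<alpha> \<in> V" "A = \<alpha> \<circ> \<phi>" using ext.IH(1) by blast
  have "factors C" using factors_quot[OF ext.hyps(5) C ext.hyps(7) ext.prems(1)] .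
  then obtain \<gamma> where \<gamma>: "\<gamma> \<in> V" "C = \<gamma> \<circ> \<phi>" using ext.IH(2) by blast
  obtain \<beta> where \<beta>: "\<beta> \<in> mods \<iota>L" "B = \<beta> \<circ> \<phi>" using descend_mods[OF ext.hyps(3) ext.prems(1)] by blast
  have "is_hom (\<alpha> \<circ> \<phi>) (\<beta> \<circ> \<phi>) a" "is_hom (\<beta> \<circ> \<phi>) (\<gamma> \<circ> \<phi>) b"
    using ext.hyps(4,5) \<alpha>(2) \<beta>(2) \<gamma>(2) by (simp_all only:)
  then have h: "is_hom \<alpha> \<beta> a" "is_hom \<beta> \<gamma> b" using pull_hom by blast+
  have ce: "closed_extensions \<iota>L V" using V unfolding wide_def by blast
  have "\<beta> \<in> V" using ce[unfolded closed_extensions_def, rule_format, OF \<alpha>(1) \<gamma>(1)] \<beta>(1) h ext.hyps(6-8) by blast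
  then show ?case using \<beta> by blast
qed

lemma ses_dims:
  fixes a b :: "'k mat"
  assumes a: "a \<in> carrier_mat \<beta> \<alpha>" and b: "b \<in> carrier_mat \<gamma> \<beta>" and mo: "mono_mat a"
    and ep: "epi_mat b" and ex: "exact_at a b" and a0: "0 < \<alpha>" and c0: "0 < \<gamma>"
  shows "\<alpha> < \<beta> \<and> \<gamma> < \<beta>"
proof
  have le: "\<alpha> \<le> \<beta>" using mono_le[OF a mo] .
  show "\<alpha> < \<beta>"
  proof (rule ccontr)
    assume "\<not> \<alpha> < \<beta>" then have eq: "\<alpha> = \<beta>" using le by simp
    have as: "a \<in> carrier_mat \<beta> \<beta>" using a eq by simp
    have aep: "epi_mat a" using square_mono_epi[OF as mo] .
    have e: "unit_vec \<gamma> 0 \<in> carrier_vec \<gamma>" by simp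
    obtain v where v: "v \<in> carrier_vec \<beta>" "b *\<^sub>v v = unit_vec \<gamma> 0" using epiD[OF ep b e] by blast
    obtain u where u: "u \<in> carrier_vec \<beta>" "a *\<^sub>v u = v" using epiD[OF aep as v(1)] by blast
    have "unit_vec \<gamma> 0 = b *\<^sub>v v" using v(2) by simp
    also have "\<dots> = b *\<^sub>v (a *\<^sub>v u)" using u(2) by simp
    also have "\<dots> = 0\<^sub>v \<gamma>" using exactD2[OF ex b as u(1)] .
    finally have "unit_vec \<gamma> 0 = (0\<^sub>v \<gamma> :: 'k vec)" .
    then have "unit_vec \<gamma> 0 $ 0 = (0\<^sub>v \<gamma> :: 'k vec) $ 0" by simp
    then show False using c0 by simp
  qed
  have le2: "\<gamma> \<le> \<beta>" using epi_le[OF b ep] .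
  show "\<gamma> < \<beta>"
  proof (rule ccontr)
    assume "\<not> \<gamma> < \<beta>" then have eq: "\<gamma> = \<beta>" using le2 by simp
    have bs: "b \<in> carrier_mat \<beta> \<beta>" using b eq by simp
    have bmo: "mono_mat b" using square_epi_mono[OF bs ep] .
    have e: "unit_vec \<alpha> 0 \<in> carrier_vec \<alpha>" by simp
    have "b *\<^sub>v (a *\<^sub>v unit_vec \<alpha> 0) = 0\<^sub>v \<beta>" using exactD2[OF ex bs a e] .
    then have "a *\<^sub>v unit_vec \<alpha> 0 = 0\<^sub>v \<beta>" using monoD[OF bmo bs] a by simp
    then have "unit_vec \<alpha> 0 = (0\<^sub>v \<alpha> :: 'k vec)" using monoD[OF mo a e] by simp
    then have "unit_vec \<alpha> 0 $ 0 = (0\<^sub>v \<alpha> :: 'k vec) $ 0" by simp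
    then show False using a0 by simp
  qed
qed

end



lemma hom_via_mono:
  fixes \<iota> :: "'k::field \<Rightarrow> 'a::{ring,monoid_mult}"
  assumes W: "W \<in> mods \<iota>" and Z: "Z \<in> mods \<iota>" and Y: "Y \<in> mods \<iota>"
    and m: "is_hom Z Y m" and mo: "mono_mat m" and h: "is_hom W Y h"
    and s: "s \<in> carrier_mat (rdim Z) (rdim W)" and eq: "h = m * s"
  shows "is_hom W Z s"
proof -
  note mc = hom_carrier[OF m]
  note Wc = mods_carrier[OF W] and Zc = mods_carrier[OF Z] and Yc = mods_carrier[OF Y]
  have "s * W g = Z g * s" for g
  proof (rule mono_cancel[OF mo mc])
    show "s * W g \<in> carrier_mat (rdim Z) (rdim W)" using s Wc by (metis mult_carrier_mat)
    show "Z g * s \<in> carrier_mat (rdim Z) (rdim W)" using s Zc by (metis mult_carrier_mat)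
    have "m * (s * W g) = (m * s) * W g" by (rule assoc_mult_mat[OF mc s Wc, symmetric])
    also have "\<dots> = h * W g" using eq by simp
    also have "\<dots> = Y g * h" using hom_eq[OF h] by simp
    also have "\<dots> = (Y g * m) * s" unfolding eq by (rule assoc_mult_mat[OF Yc mc s, symmetric])
    also have "Y g * m = m * Z g" using hom_eq[OF m] by simp
    also have "(m * Z g) * s = m * (Z g * s)" by (rule assoc_mult_mat[OF mc Zc s])
    finally show "m * (s * W g) = m * (Z g * s)" .
  qed
  then show ?thesis unfolding is_hom_def using s by auto
qed

lemma hom_via_epi:
  fixes \<iota> :: "'k::field \<Rightarrow> 'a::{ring,monoid_mult}"
  assumes W: "W \<in> mods \<iota>" and Z: "Z \<in> mods \<iota>" and Y: "Y \<in> mods \<iota>"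
    and p: "is_hom Y Z p" and ep: "epi_mat p" and h: "is_hom Y W h"
    and s: "s \<in> carrier_mat (rdim W) (rdim Z)" and eq: "h = s * p"
  shows "is_hom Z W s"
proof -
  note pc = hom_carrier[OF p]
  note Wc = mods_carrier[OF W] and Zc = mods_carrier[OF Z] and Yc = mods_carrier[OF Y]
  have "s * Z g = W g * s" for g
  proof (rule epi_cancel[OF ep pc])
    show "s * Z g \<in> carrier_mat (rdim W) (rdim Z)" using s Zc by (metis mult_carrier_mat)
    show "W g * s \<in> carrier_mat (rdim W) (rdim Z)" using s Wc by (metis mult_carrier_mat)
    have "(s * Z g) * p = s * (Z g * p)" by (rule assoc_mult_mat[OF s Zc pc])
    also have "Z g * p = p * Y g" using hom_eq[OF p] by simp
    also have "s * (p * Y g) = (s * p) * Y g" by (rule assoc_mult_mat[OF s pc Yc, symmetric])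
    also have "\<dots> = h * Y g" using eq by simp
    also have "\<dots> = W g * h" using hom_eq[OF h] by simp
    also have "\<dots> = (W g * s) * p" unfolding eq by (rule assoc_mult_mat[OF Wc s pc, symmetric])
    finally show "(s * Z g) * p = (W g * s) * p" .
  qed
  then show ?thesis unfolding is_hom_def using s by auto
qed

lemma mono_comp:
  fixes a :: "'k::field mat"
  assumes a: "a \<in> carrier_mat n m" and b: "b \<in> carrier_mat m k" and ma: "mono_mat a" and mb: "mono_mat b"
  shows "mono_mat (a * b)"
proof (rule monoI)
  show "a * b \<in> carrier_mat n k" using a b by simp
  fix v :: "'k vec" assume v: "v \<in> carrier_vec k" and z: "(a * b) *\<^sub>v v = 0\<^sub>v n"
  have "a *\<^sub>v (b *\<^sub>v v) = 0\<^sub>v n" using z a b v by simp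
  then have "b *\<^sub>v v = 0\<^sub>v m" using monoD[OF ma a] b v by simp
  then show "v = 0\<^sub>v k" using monoD[OF mb b v] by simp
qed

lemma mono_right:
  fixes a :: "'k::field mat"
  assumes a: "a \<in> carrier_mat n m" and b: "b \<in> carrier_mat m k" and mab: "mono_mat (a * b)"
  shows "mono_mat b"
proof (rule monoI[OF b])
  fix v :: "'k vec" assume v: "v \<in> carrier_vec k" and z: "b *\<^sub>v v = 0\<^sub>v m"
  have "(a * b) *\<^sub>v v = a *\<^sub>v (b *\<^sub>v v)" using a b v by simp
  also have "\<dots> = 0\<^sub>v n" using z mat_vec_zero[OF a] by simp
  finally show "v = 0\<^sub>v k" using monoD[OF mab mult_carrier_mat[OF a b] v] by simp
qed

lemma epi_comp:
  fixes a :: "'k::field mat"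
  assumes a: "a \<in> carrier_mat n m" and b: "b \<in> carrier_mat m k" and ea: "epi_mat a" and eb: "epi_mat b"
  shows "epi_mat (a * b)"
proof (rule epiI)
  show "a * b \<in> carrier_mat n k" using a b by simp
  fix w :: "'k vec" assume w: "w \<in> carrier_vec n"
  obtain u where u: "u \<in> carrier_vec m" "a *\<^sub>v u = w" using epiD[OF ea a w] by blast
  obtain v where v: "v \<in> carrier_vec k" "b *\<^sub>v v = u" using epiD[OF eb b u(1)] by blast
  have "(a * b) *\<^sub>v v = w" using a b u v by simp
  then show "\<exists>v\<in>carrier_vec k. (a * b) *\<^sub>v v = w" using v by blast
qed

lemma epi_left:
  fixes a :: "'k::field mat"
  assumes a: "a \<in> carrier_mat n m" and b: "b \<in> carrier_mat m k" and eab: "epi_mat (a * b)"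
  shows "epi_mat a"
proof (rule epiI[OF a])
  fix w :: "'k vec" assume w: "w \<in> carrier_vec n"
  obtain v where v: "v \<in> carrier_vec k" "(a * b) *\<^sub>v v = w" using epiD[OF eab _ w] a b by (metis mult_carrier_mat)
  have "a *\<^sub>v (b *\<^sub>v v) = w" using v a b by simp
  then show "\<exists>u\<in>carrier_vec m. a *\<^sub>v u = w" using b v by (intro bexI[of _ "b *\<^sub>v v"]) auto
qed

lemma vec_eq_diff:
  fixes v :: "'k::field vec"
  assumes "v \<in> carrier_vec n" "w \<in> carrier_vec n" "u \<in> carrier_vec n" "v - w = u"
  shows "v = w + u"
  by (rule eq_vecI) (insert assms, auto)

lemma mat_vec_diff_zero:
  fixes A :: "'k::field mat"
  assumes A: "A \<in> carrier_mat m n" and v: "v \<in> carrier_vec n" and w: "w \<in> carrier_vec n"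
    and eq: "A *\<^sub>v v = A *\<^sub>v w"
  shows "A *\<^sub>v (v - w) = 0\<^sub>v m"
proof -
  have "A *\<^sub>v (v - w) = A *\<^sub>v v - A *\<^sub>v w" by (rule mult_minus_distrib_mat_vec[OF A v w])
  also have "\<dots> = 0\<^sub>v m" unfolding eq using A w by simp
  finally show ?thesis .
qed

context filt_ctx begin

definition kerP :: "('g \<Rightarrow> 'k mat) \<Rightarrow> 'k mat \<Rightarrow> bool" where
  "kerP X f \<longleftrightarrow> (\<forall>K i. K \<in> mods \<iota>G \<longrightarrow> is_hom K X i \<longrightarrow> mono_mat i \<longrightarrow> exact_at i f \<longrightarrow> filt K)"

definition cokP :: "('g \<Rightarrow> 'k mat) \<Rightarrow> 'k mat \<Rightarrow> bool" where
  "cokP Y f \<longleftrightarrow> (\<forall>C p. C \<in> mods \<iota>G \<longrightarrow> is_hom Y C p \<longrightarrow> epi_mat p \<longrightarrow> exact_at f p \<longrightarrow> filt C)"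

lemma case_base:
  assumes \<xi>: "\<xi> \<in> V" and \<eta>: "\<eta> \<in> V" and f: "is_hom (\<xi> \<circ> \<phi>) (\<eta> \<circ> \<phi>) f"
  shows "kerP (\<xi> \<circ> \<phi>) f \<and> cokP (\<eta> \<circ> \<phi>) f"
proof
  have fL: "is_hom \<xi> \<eta> f" using f pull_hom by blast
  have ck: "closed_kernels \<iota>L V" and cc: "closed_cokernels \<iota>L V" using V unfolding wide_def by blast+
  show "kerP (\<xi> \<circ> \<phi>) f" unfolding kerP_def
  proof (intro allI impI)
    fix K i assume K: "K \<in> mods \<iota>G" and i: "is_hom K (\<xi> \<circ> \<phi>) i" and mo: "mono_mat i" and ex: "exact_at i f"
    have "factors K" by (rule factors_sub[OF i K mo factors_pull])
    then obtain \<kappa> where \<kappa>: "\<kappa> \<in> mods \<iota>L" "K = \<kappa> \<circ> \<phi>" using descend_mods[OF K] by blast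
    have "is_hom (\<kappa> \<circ> \<phi>) (\<xi> \<circ> \<phi>) i" using i \<kappa>(2) by (simp only:)
    then have iL: "is_hom \<kappa> \<xi> i" using pull_hom by blast
    have "\<kappa> \<in> V" using ck[unfolded closed_kernels_def, rule_format, OF \<xi> \<eta>] \<kappa>(1) fL iL mo ex by blast
    from filt.base[OF this] show "filt K" unfolding \<kappa>(2) .
  qed
  show "cokP (\<eta> \<circ> \<phi>) f" unfolding cokP_def
  proof (intro allI impI)
    fix C p assume C: "C \<in> mods \<iota>G" and p: "is_hom (\<eta> \<circ> \<phi>) C p" and ep: "epi_mat p" and ex: "exact_at f p"
    have "factors C" by (rule factors_quot[OF p C ep factors_pull])
    then obtain \<kappa> where \<kappa>: "\<kappa> \<in> mods \<iota>L" "C = \<kappa> \<circ> \<phi>" using descend_mods[OF C] by blast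
    have "is_hom (\<eta> \<circ> \<phi>) (\<kappa> \<circ> \<phi>) p" using p \<kappa>(2) by (simp only:)
    then have pL: "is_hom \<eta> \<kappa> p" using pull_hom by blast
    have "\<kappa> \<in> V" using cc[unfolded closed_cokernels_def, rule_format, OF \<xi> \<eta>] \<kappa>(1) fL pL ep ex by blast
    from filt.base[OF this] show "filt C" unfolding \<kappa>(2) .
  qed
qed

end



context filt_ctx begin

lemma case_Xext:
  assumes IH: "\<And>X' Y' f'. rdim X' + rdim Y' < rdim X + rdim Y \<Longrightarrow> filt X' \<Longrightarrow> filt Y' \<Longrightarrow>
      is_hom X' Y' f' \<Longrightarrow> kerP X' f' \<and> cokP Y' f'"
    and X1: "filt X1" and X2: "filt X2" and Xm: "X \<in> mods \<iota>G"
    and a: "is_hom X1 X a" and b: "is_hom X X2 b" and ma: "mono_mat a" and eb: "epi_mat b"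
    and exab: "exact_at a b" and d1: "0 < rdim X1" and d2: "0 < rdim X2"
    and Y: "filt Y" and f: "is_hom X Y f"
  shows "kerP X f \<and> cokP Y f"
proof -
  have X1m: "X1 \<in> mods \<iota>G" and X2m: "X2 \<in> mods \<iota>G" and Ym: "Y \<in> mods \<iota>G"
    using filt_mods X1 X2 Y by auto
  note ac = hom_carrier[OF a] and bc = hom_carrier[OF b] and fc = hom_carrier[OF f]
  have dims: "rdim X1 < rdim X \<and> rdim X2 < rdim X" by (rule ses_dims[OF ac bc ma eb exab d1 d2])
  define f1 where "f1 = f * a"
  have f1h: "is_hom X1 Y f1" unfolding f1_def by (rule hom_comp[OF X1m Xm Ym a f])
  note f1c = hom_carrier[OF f1h]
  have IH1: "kerP X1 f1 \<and> cokP Y f1" using IH[OF _ X1 Y f1h] dims by simp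
  obtain K1 i1 where K1: "K1 \<in> mods \<iota>G" and i1: "is_hom K1 X1 i1" and mi1: "mono_mat i1"
    and exi1: "exact_at i1 f1"
    using kernel_rep[OF X1m Ym f1h] by blast
  have K1f: "filt K1" using IH1 K1 i1 mi1 exi1 unfolding kerP_def by blast
  obtain C1 q where C1: "C1 \<in> mods \<iota>G" and q: "is_hom Y C1 q" and eq: "epi_mat q"
    and exq: "exact_at f1 q"
    using cokernel_rep[OF X1m Ym f1h] by blast
  have C1f: "filt C1" using IH1 C1 q eq exq unfolding cokP_def by blast
  note i1c = hom_carrier[OF i1] and qc = hom_carrier[OF q]
  have dC1: "rdim C1 \<le> rdim Y" using epi_le[OF qc eq] .
  have qf1: "q * f1 = 0\<^sub>m (rdim C1) (rdim X1)" by (rule exact_zero[OF f1c qc exq])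
  have "(q * f) * a = q * f1" unfolding f1_def by (rule assoc_mult_mat[OF qc fc ac])
  then have "(q * f) * a = 0\<^sub>m (rdim C1) (rdim X1)" using qf1 by simp
  then obtain f2 where f2c: "f2 \<in> carrier_mat (rdim C1) (rdim X2)" and qf: "q * f = f2 * b"
    using coker_factor[OF ac bc eb exab mult_carrier_mat[OF qc fc]] by blast
  have f2h: "is_hom X2 C1 f2" by (rule hom_via_epi[OF C1 X2m Xm b eb hom_comp[OF Xm Ym C1 f q] f2c qf])
  have IH2: "kerP X2 f2 \<and> cokP C1 f2" using IH[OF _ X2 C1f f2h] dims dC1 by simp
  show ?thesis
  proof
    show "kerP X f" unfolding kerP_def
    proof (intro allI impI)
      fix Kf i assume Kf: "Kf \<in> mods \<iota>G" and i: "is_hom Kf X i" and mi: "mono_mat i"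
        and exi: "exact_at i f"
      note ic = hom_carrier[OF i]
      obtain K2 i2 where K2: "K2 \<in> mods \<iota>G" and i2: "is_hom K2 X2 i2" and mi2: "mono_mat i2"
        and exi2: "exact_at i2 f2"
        using kernel_rep[OF X2m C1 f2h] by blast
      have K2f: "filt K2" using IH2 K2 i2 mi2 exi2 unfolding kerP_def by blast
      note i2c = hom_carrier[OF i2]
      have fi: "f * i = 0\<^sub>m (rdim Y) (rdim Kf)" by (rule exact_zero[OF ic fc exi])
      have f1i1: "f1 * i1 = 0\<^sub>m (rdim Y) (rdim K1)" by (rule exact_zero[OF i1c f1c exi1])
      have "f * (a * i1) = f1 * i1" unfolding f1_def by (rule assoc_mult_mat[OF fc ac i1c, symmetric])
      then have "f * (a * i1) = 0\<^sub>m (rdim Y) (rdim K1)" using f1i1 by simp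
      then obtain s where sc: "s \<in> carrier_mat (rdim Kf) (rdim K1)" and ai1: "a * i1 = i * s"
        using ker_factor[OF fc ic exi mult_carrier_mat[OF ac i1c]] by blast
      have "f2 * (b * i) = (f2 * b) * i" by (rule assoc_mult_mat[OF f2c bc ic, symmetric])
      also have "\<dots> = (q * f) * i" using qf by simp
      also have "\<dots> = q * (f * i)" by (rule assoc_mult_mat[OF qc fc ic])
      also have "\<dots> = 0\<^sub>m (rdim C1) (rdim Kf)" using fi right_mult_zero_mat[OF qc] by simp
      finally obtain t where tc: "t \<in> carrier_mat (rdim K2) (rdim Kf)" and bi: "b * i = i2 * t"
        using ker_factor[OF f2c i2c exi2 mult_carrier_mat[OF bc ic]] by blast
      have sh: "is_hom K1 Kf s" by (rule hom_via_mono[OF K1 Kf Xm i mi hom_comp[OF K1 X1m Xm i1 a] sc ai1])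
      have th: "is_hom Kf K2 t" by (rule hom_via_mono[OF Kf K2 X2m i2 mi2 hom_comp[OF Kf Xm X2m i b] tc bi])
      have "mono_mat (i * s)" unfolding ai1[symmetric] by (rule mono_comp[OF ac i1c ma mi1])
      then have ms: "mono_mat s" by (rule mono_right[OF ic sc])
      have et: "epi_mat t"
      proof (rule epiI[OF tc])
        fix w :: "'k vec" assume w: "w \<in> carrier_vec (rdim K2)"
        define x2 where "x2 = i2 *\<^sub>v w"
        have x2: "x2 \<in> carrier_vec (rdim X2)" unfolding x2_def using i2c w by simp
        have fx2: "f2 *\<^sub>v x2 = 0\<^sub>v (rdim C1)" unfolding x2_def by (rule exactD2[OF exi2 f2c i2c w])
        obtain x where x: "x \<in> carrier_vec (rdim X)" "b *\<^sub>v x = x2" using epiD[OF eb bc x2] by blast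
        have fx: "f *\<^sub>v x \<in> carrier_vec (rdim Y)" using fc x(1) by simp
        have "q *\<^sub>v (f *\<^sub>v x) = (q * f) *\<^sub>v x" using qc fc x(1) by simp
        also have "\<dots> = f2 *\<^sub>v (b *\<^sub>v x)" using qf f2c bc x(1) by simp
        also have "\<dots> = 0\<^sub>v (rdim C1)" using x(2) fx2 by simp
        finally obtain y1 where y1: "y1 \<in> carrier_vec (rdim X1)" "f *\<^sub>v x = f1 *\<^sub>v y1"
          using exactD1[OF exq qc f1c fx] by blast
        have ay1: "a *\<^sub>v y1 \<in> carrier_vec (rdim X)" using ac y1(1) by simp
        have "f *\<^sub>v x = f *\<^sub>v (a *\<^sub>v y1)" using y1(2) fc ac y1(1) unfolding f1_def by simp
        then have fd: "f *\<^sub>v (x - a *\<^sub>v y1) = 0\<^sub>v (rdim Y)" by (rule mat_vec_diff_zero[OF fc x(1) ay1])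
        have xd: "x - a *\<^sub>v y1 \<in> carrier_vec (rdim X)" using x(1) ay1 by simp
        obtain z where z: "z \<in> carrier_vec (rdim Kf)" "x - a *\<^sub>v y1 = i *\<^sub>v z"
          using exactD1[OF exi fc ic xd fd] by blast
        have "i2 *\<^sub>v (t *\<^sub>v z) = (i2 * t) *\<^sub>v z" using i2c tc z(1) by simp
        also have "\<dots> = b *\<^sub>v (i *\<^sub>v z)" using bi[symmetric] bc ic z(1) by simp
        also have "\<dots> = b *\<^sub>v (x - a *\<^sub>v y1)" using z(2) by simp
        also have "\<dots> = b *\<^sub>v x - b *\<^sub>v (a *\<^sub>v y1)" by (rule mult_minus_distrib_mat_vec[OF bc x(1) ay1])
        also have "\<dots> = x2 - 0\<^sub>v (rdim X2)" using x(2) exactD2[OF exab bc ac y1(1)] by simp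
        also have "\<dots> = i2 *\<^sub>v w" using x2 unfolding x2_def by simp
        finally have "i2 *\<^sub>v (t *\<^sub>v z) = i2 *\<^sub>v w" .
        moreover have "t *\<^sub>v z \<in> carrier_vec (rdim K2)" using tc z(1) by simp
        ultimately have "t *\<^sub>v z = w" using mono_inj[OF mi2 i2c _ w] by blast
        then show "\<exists>v\<in>carrier_vec (rdim Kf). t *\<^sub>v v = w" using z(1) by blast
      qed
      have exst: "exact_at s t"
      proof (rule exactI[OF tc sc])
        fix z :: "'k vec" assume z: "z \<in> carrier_vec (rdim Kf)" and tz: "t *\<^sub>v z = 0\<^sub>v (rdim K2)"
        have iz: "i *\<^sub>v z \<in> carrier_vec (rdim X)" using ic z by simp
        have "b *\<^sub>v (i *\<^sub>v z) = (i2 * t) *\<^sub>v z" using bi[symmetric] bc ic z by simp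
        also have "\<dots> = i2 *\<^sub>v (t *\<^sub>v z)" using i2c tc z by simp
        also have "\<dots> = 0\<^sub>v (rdim X2)" using tz mat_vec_zero[OF i2c] by simp
        finally obtain x1 where x1: "x1 \<in> carrier_vec (rdim X1)" "i *\<^sub>v z = a *\<^sub>v x1"
          using exactD1[OF exab bc ac iz] by blast
        have "f1 *\<^sub>v x1 = f *\<^sub>v (a *\<^sub>v x1)" unfolding f1_def using fc ac x1(1) by simp
        also have "\<dots> = f *\<^sub>v (i *\<^sub>v z)" using x1(2) by simp
        also have "\<dots> = 0\<^sub>v (rdim Y)" by (rule exactD2[OF exi fc ic z])
        finally obtain w where w: "w \<in> carrier_vec (rdim K1)" "x1 = i1 *\<^sub>v w"
          using exactD1[OF exi1 f1c i1c x1(1)] by blast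
        have "i *\<^sub>v z = (a * i1) *\<^sub>v w" using x1(2) w(2) ac i1c w(1) by simp
        also have "\<dots> = i *\<^sub>v (s *\<^sub>v w)" using ai1 ic sc w(1) by simp
        finally have "i *\<^sub>v z = i *\<^sub>v (s *\<^sub>v w)" .
        moreover have "s *\<^sub>v w \<in> carrier_vec (rdim Kf)" using sc w(1) by simp
        ultimately have "z = s *\<^sub>v w" using mono_inj[OF mi ic z] by blast
        then show "\<exists>u\<in>carrier_vec (rdim K1). z = s *\<^sub>v u" using w(1) by blast
      next
        fix u :: "'k vec" assume u: "u \<in> carrier_vec (rdim K1)"
        have su: "s *\<^sub>v u \<in> carrier_vec (rdim Kf)" using sc u by simp
        have i1u: "i1 *\<^sub>v u \<in> carrier_vec (rdim X1)" using i1c u by simp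
        have "i *\<^sub>v (s *\<^sub>v u) = (a * i1) *\<^sub>v u" using ai1 ic sc u by simp
        also have "\<dots> = a *\<^sub>v (i1 *\<^sub>v u)" using ac i1c u by simp
        finally have isu: "i *\<^sub>v (s *\<^sub>v u) = a *\<^sub>v (i1 *\<^sub>v u)" .
        have "i2 *\<^sub>v (t *\<^sub>v (s *\<^sub>v u)) = (i2 * t) *\<^sub>v (s *\<^sub>v u)" using i2c tc su by simp
        also have "\<dots> = b *\<^sub>v (i *\<^sub>v (s *\<^sub>v u))" using bi[symmetric] bc ic su by simp
        also have "\<dots> = b *\<^sub>v (a *\<^sub>v (i1 *\<^sub>v u))" using isu by simp
        also have "\<dots> = 0\<^sub>v (rdim X2)" by (rule exactD2[OF exab bc ac i1u])
        finally have "i2 *\<^sub>v (t *\<^sub>v (s *\<^sub>v u)) = 0\<^sub>v (rdim X2)" .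
        moreover have "t *\<^sub>v (s *\<^sub>v u) \<in> carrier_vec (rdim K2)" using tc su by simp
        ultimately show "t *\<^sub>v (s *\<^sub>v u) = 0\<^sub>v (rdim K2)" using monoD[OF mi2 i2c] by blast
      qed
      show "filt Kf" by (rule filt_ses[OF K1f K2f Kf sh th ms et exst])
    qed
  next
    show "cokP Y f" unfolding cokP_def
    proof (intro allI impI)
      fix C p assume C: "C \<in> mods \<iota>G" and p: "is_hom Y C p" and ep: "epi_mat p"
        and exp: "exact_at f p"
      note pc = hom_carrier[OF p]
      have pf: "p * f = 0\<^sub>m (rdim C) (rdim X)" by (rule exact_zero[OF fc pc exp])
      have "p * f1 = (p * f) * a" unfolding f1_def by (rule assoc_mult_mat[OF pc fc ac, symmetric])
      then have "p * f1 = 0\<^sub>m (rdim C) (rdim X1)" using pf left_mult_zero_mat[OF ac] by simp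
      then obtain p2 where p2c: "p2 \<in> carrier_mat (rdim C) (rdim C1)" and pq: "p = p2 * q"
        using coker_factor[OF f1c qc eq exq pc] by blast
      have p2h: "is_hom C1 C p2" by (rule hom_via_epi[OF C C1 Ym q eq p p2c pq])
      have ep2: "epi_mat p2" using epi_left[OF p2c qc] ep pq by simp
      have ex2: "exact_at f2 p2"
      proof (rule exactI[OF p2c f2c])
        fix z :: "'k vec" assume z: "z \<in> carrier_vec (rdim C1)" and pz: "p2 *\<^sub>v z = 0\<^sub>v (rdim C)"
        obtain y where y: "y \<in> carrier_vec (rdim Y)" "q *\<^sub>v y = z" using epiD[OF eq qc z] by blast
        have "p *\<^sub>v y = p2 *\<^sub>v (q *\<^sub>v y)" using pq p2c qc y(1) by simp
        also have "\<dots> = 0\<^sub>v (rdim C)" using y(2) pz by simp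
        finally obtain x where x: "x \<in> carrier_vec (rdim X)" "y = f *\<^sub>v x"
          using exactD1[OF exp pc fc y(1)] by blast
        have "z = (q * f) *\<^sub>v x" using y(2) x(2) qc fc x(1) by simp
        also have "\<dots> = f2 *\<^sub>v (b *\<^sub>v x)" using qf f2c bc x(1) by simp
        finally show "\<exists>u\<in>carrier_vec (rdim X2). z = f2 *\<^sub>v u" using bc x(1)
          by (intro bexI[of _ "b *\<^sub>v x"]) auto
      next
        fix u :: "'k vec" assume u: "u \<in> carrier_vec (rdim X2)"
        obtain x where x: "x \<in> carrier_vec (rdim X)" "b *\<^sub>v x = u" using epiD[OF eb bc u] by blast
        have "p2 *\<^sub>v (f2 *\<^sub>v u) = p2 *\<^sub>v ((f2 * b) *\<^sub>v x)" using x f2c bc by simp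
        also have "\<dots> = p2 *\<^sub>v ((q * f) *\<^sub>v x)" using qf by simp
        also have "\<dots> = (p2 * q) *\<^sub>v (f *\<^sub>v x)" using p2c qc fc x(1) by simp
        also have "\<dots> = p *\<^sub>v (f *\<^sub>v x)" using pq by simp
        also have "\<dots> = 0\<^sub>v (rdim C)" by (rule exactD2[OF exp pc fc x(1)])
        finally show "p2 *\<^sub>v (f2 *\<^sub>v u) = 0\<^sub>v (rdim C)" .
      qed
      show "filt C" using IH2 C p2h ep2 ex2 unfolding cokP_def by blast
    qed
  qed
qed

end



context filt_ctx begin

lemma case_Yext:
  assumes IH: "\<And>X' Y' f'. rdim X' + rdim Y' < rdim X + rdim Y \<Longrightarrow> filt X' \<Longrightarrow> filt Y' \<Longrightarrow>
      is_hom X' Y' f' \<Longrightarrow> kerP X' f' \<and> cokP Y' f'"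
    and X: "filt X" and Y1: "filt Y1" and Y2: "filt Y2" and Ym: "Y \<in> mods \<iota>G"
    and c: "is_hom Y1 Y c" and d: "is_hom Y Y2 d" and mc: "mono_mat c" and ed: "epi_mat d"
    and excd: "exact_at c d" and d1: "0 < rdim Y1" and d2: "0 < rdim Y2"
    and f: "is_hom X Y f"
  shows "kerP X f \<and> cokP Y f"
proof -
  have Xm: "X \<in> mods \<iota>G" and Y1m: "Y1 \<in> mods \<iota>G" and Y2m: "Y2 \<in> mods \<iota>G"
    using filt_mods X Y1 Y2 by auto
  note cc = hom_carrier[OF c] and dc = hom_carrier[OF d] and fc = hom_carrier[OF f]
  have dims: "rdim Y1 < rdim Y \<and> rdim Y2 < rdim Y" by (rule ses_dims[OF cc dc mc ed excd d1 d2])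
  define g0 where "g0 = d * f"
  have g0h: "is_hom X Y2 g0" unfolding g0_def by (rule hom_comp[OF Xm Ym Y2m f d])
  note g0c = hom_carrier[OF g0h]
  have IH3: "kerP X g0 \<and> cokP Y2 g0" using IH[OF _ X Y2 g0h] dims by simp
  obtain K k where Km: "K \<in> mods \<iota>G" and k: "is_hom K X k" and mk: "mono_mat k"
    and exk: "exact_at k g0"
    using kernel_rep[OF Xm Y2m g0h] by blast
  have Kf: "filt K" using IH3 Km k mk exk unfolding kerP_def by blast
  note kc = hom_carrier[OF k]
  have dK: "rdim K \<le> rdim X" using mono_le[OF kc mk] .
  have g0k: "g0 * k = 0\<^sub>m (rdim Y2) (rdim K)" by (rule exact_zero[OF kc g0c exk])
  have "d * (f * k) = g0 * k" unfolding g0_def by (rule assoc_mult_mat[OF dc fc kc, symmetric])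
  then have "d * (f * k) = 0\<^sub>m (rdim Y2) (rdim K)" using g0k by simp
  then obtain fK where fKc: "fK \<in> carrier_mat (rdim Y1) (rdim K)" and fk: "f * k = c * fK"
    using ker_factor[OF dc cc excd mult_carrier_mat[OF fc kc]] by blast
  have fKh: "is_hom K Y1 fK" by (rule hom_via_mono[OF Km Y1m Ym c mc hom_comp[OF Km Xm Ym k f] fKc fk])
  have IH4: "kerP K fK \<and> cokP Y1 fK" using IH[OF _ Kf Y1 fKh] dims dK by simp
  show ?thesis
  proof
    show "kerP X f" unfolding kerP_def
    proof (intro allI impI)
      fix Kf i assume Kfm: "Kf \<in> mods \<iota>G" and i: "is_hom Kf X i" and mi: "mono_mat i"
        and exi: "exact_at i f"
      note ic = hom_carrier[OF i]
      have fi: "f * i = 0\<^sub>m (rdim Y) (rdim Kf)" by (rule exact_zero[OF ic fc exi])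
      have "g0 * i = d * (f * i)" unfolding g0_def by (rule assoc_mult_mat[OF dc fc ic])
      then have "g0 * i = 0\<^sub>m (rdim Y2) (rdim Kf)" using fi right_mult_zero_mat[OF dc] by simp
      then obtain i' where i'c: "i' \<in> carrier_mat (rdim K) (rdim Kf)" and ki: "i = k * i'"
        using ker_factor[OF g0c kc exk ic] by blast
      have i'h: "is_hom Kf K i'" by (rule hom_via_mono[OF Kfm Km Xm k mk i i'c ki])
      have mi': "mono_mat i'" using mono_right[OF kc i'c] mi ki by simp
      have exi': "exact_at i' fK"
      proof (rule exactI[OF fKc i'c])
        fix w :: "'k vec" assume w: "w \<in> carrier_vec (rdim K)" and z: "fK *\<^sub>v w = 0\<^sub>v (rdim Y1)"
        have kw: "k *\<^sub>v w \<in> carrier_vec (rdim X)" using kc w by simp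
        have "f *\<^sub>v (k *\<^sub>v w) = (c * fK) *\<^sub>v w" using fk[symmetric] fc kc w by simp
        also have "\<dots> = c *\<^sub>v (fK *\<^sub>v w)" using cc fKc w by simp
        also have "\<dots> = 0\<^sub>v (rdim Y)" using z mat_vec_zero[OF cc] by simp
        finally obtain u where u: "u \<in> carrier_vec (rdim Kf)" "k *\<^sub>v w = i *\<^sub>v u"
          using exactD1[OF exi fc ic kw] by blast
        have "k *\<^sub>v w = k *\<^sub>v (i' *\<^sub>v u)" using u(2) ki kc i'c u(1) by simp
        moreover have "i' *\<^sub>v u \<in> carrier_vec (rdim K)" using i'c u(1) by simp
        ultimately have "w = i' *\<^sub>v u" using mono_inj[OF mk kc w] by blast
        then show "\<exists>u\<in>carrier_vec (rdim Kf). w = i' *\<^sub>v u" using u(1) by blast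
      next
        fix u :: "'k vec" assume u: "u \<in> carrier_vec (rdim Kf)"
        have i'u: "i' *\<^sub>v u \<in> carrier_vec (rdim K)" using i'c u by simp
        have "c *\<^sub>v (fK *\<^sub>v (i' *\<^sub>v u)) = (c * fK) *\<^sub>v (i' *\<^sub>v u)" using cc fKc i'u by simp
        also have "\<dots> = f *\<^sub>v ((k * i') *\<^sub>v u)" using fk[symmetric] fc kc i'c u by simp
        also have "\<dots> = f *\<^sub>v (i *\<^sub>v u)" using ki by simp
        also have "\<dots> = 0\<^sub>v (rdim Y)" by (rule exactD2[OF exi fc ic u])
        finally have "c *\<^sub>v (fK *\<^sub>v (i' *\<^sub>v u)) = 0\<^sub>v (rdim Y)" .
        moreover have "fK *\<^sub>v (i' *\<^sub>v u) \<in> carrier_vec (rdim Y1)" using fKc i'u by simp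
        ultimately show "fK *\<^sub>v (i' *\<^sub>v u) = 0\<^sub>v (rdim Y1)" using monoD[OF mc cc] by blast
      qed
      show "filt Kf" using IH4 Kfm i'h mi' exi' unfolding kerP_def by blast
    qed
  next
    show "cokP Y f" unfolding cokP_def
    proof (intro allI impI)
      fix C p assume Cm: "C \<in> mods \<iota>G" and p: "is_hom Y C p" and ep: "epi_mat p"
        and exp: "exact_at f p"
      note pc = hom_carrier[OF p]
      obtain C1 p1 where C1: "C1 \<in> mods \<iota>G" and p1: "is_hom Y1 C1 p1" and ep1: "epi_mat p1"
        and exp1: "exact_at fK p1"
        using cokernel_rep[OF Km Y1m fKh] by blast
      have C1f: "filt C1" using IH4 C1 p1 ep1 exp1 unfolding cokP_def by blast
      obtain C2 p2 where C2: "C2 \<in> mods \<iota>G" and p2: "is_hom Y2 C2 p2" and ep2: "epi_mat p2"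
        and exp2: "exact_at g0 p2"
        using cokernel_rep[OF Xm Y2m g0h] by blast
      have C2f: "filt C2" using IH3 C2 p2 ep2 exp2 unfolding cokP_def by blast
      note p1c = hom_carrier[OF p1] and p2c = hom_carrier[OF p2]
      have pf: "p * f = 0\<^sub>m (rdim C) (rdim X)" by (rule exact_zero[OF fc pc exp])
      have "(p * c) * fK = p * (c * fK)" by (rule assoc_mult_mat[OF pc cc fKc])
      also have "\<dots> = (p * f) * k" using fk[symmetric] pc fc kc by simp
      also have "\<dots> = 0\<^sub>m (rdim C) (rdim K)" using pf left_mult_zero_mat[OF kc] by simp
      finally obtain s where sc: "s \<in> carrier_mat (rdim C) (rdim C1)" and pcs: "p * c = s * p1"
        using coker_factor[OF fKc p1c ep1 exp1 mult_carrier_mat[OF pc cc]] by blast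
      have p2g0: "p2 * g0 = 0\<^sub>m (rdim C2) (rdim X)" by (rule exact_zero[OF g0c p2c exp2])
      have "(p2 * d) * f = p2 * g0" unfolding g0_def by (rule assoc_mult_mat[OF p2c dc fc])
      then have "(p2 * d) * f = 0\<^sub>m (rdim C2) (rdim X)" using p2g0 by simp
      then obtain t where tc: "t \<in> carrier_mat (rdim C2) (rdim C)" and p2d: "p2 * d = t * p"
        using coker_factor[OF fc pc ep exp mult_carrier_mat[OF p2c dc]] by blast
      have sh: "is_hom C1 C s" by (rule hom_via_epi[OF Cm C1 Y1m p1 ep1 hom_comp[OF Y1m Ym Cm c p] sc pcs])
      have th: "is_hom C C2 t" by (rule hom_via_epi[OF C2 Cm Ym p ep hom_comp[OF Ym Y2m C2 d p2] tc p2d])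
      have "epi_mat (p2 * d)" by (rule epi_comp[OF p2c dc ep2 ed])
      then have et: "epi_mat t" using epi_left[OF tc pc] p2d by simp
      have ms: "mono_mat s"
      proof (rule monoI[OF sc])
        fix v :: "'k vec" assume v: "v \<in> carrier_vec (rdim C1)" and sv: "s *\<^sub>v v = 0\<^sub>v (rdim C)"
        obtain y1 where y1: "y1 \<in> carrier_vec (rdim Y1)" "p1 *\<^sub>v y1 = v" using epiD[OF ep1 p1c v] by blast
        have cy1: "c *\<^sub>v y1 \<in> carrier_vec (rdim Y)" using cc y1(1) by simp
        have "p *\<^sub>v (c *\<^sub>v y1) = (s * p1) *\<^sub>v y1" using pcs[symmetric] pc cc y1(1) by simp
        also have "\<dots> = s *\<^sub>v (p1 *\<^sub>v y1)" using sc p1c y1(1) by simp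
        also have "\<dots> = 0\<^sub>v (rdim C)" using y1(2) sv by simp
        finally obtain x where x: "x \<in> carrier_vec (rdim X)" "c *\<^sub>v y1 = f *\<^sub>v x"
          using exactD1[OF exp pc fc cy1] by blast
        have "g0 *\<^sub>v x = d *\<^sub>v (f *\<^sub>v x)" unfolding g0_def using dc fc x(1) by simp
        also have "\<dots> = d *\<^sub>v (c *\<^sub>v y1)" using x(2) by simp
        also have "\<dots> = 0\<^sub>v (rdim Y2)" by (rule exactD2[OF excd dc cc y1(1)])
        finally obtain w where w: "w \<in> carrier_vec (rdim K)" "x = k *\<^sub>v w"
          using exactD1[OF exk g0c kc x(1)] by blast
        have "c *\<^sub>v y1 = (f * k) *\<^sub>v w" using x(2) w(2) fc kc w(1) by simp
        also have "\<dots> = c *\<^sub>v (fK *\<^sub>v w)" using fk cc fKc w(1) by simp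
        finally have "c *\<^sub>v y1 = c *\<^sub>v (fK *\<^sub>v w)" .
        moreover have "fK *\<^sub>v w \<in> carrier_vec (rdim Y1)" using fKc w(1) by simp
        ultimately have "y1 = fK *\<^sub>v w" using mono_inj[OF mc cc y1(1)] by blast
        then have "v = p1 *\<^sub>v (fK *\<^sub>v w)" using y1(2) by simp
        also have "\<dots> = 0\<^sub>v (rdim C1)" by (rule exactD2[OF exp1 p1c fKc w(1)])
        finally show "v = 0\<^sub>v (rdim C1)" .
      qed
      have exst: "exact_at s t"
      proof (rule exactI[OF tc sc])
        fix z :: "'k vec" assume z: "z \<in> carrier_vec (rdim C)" and tz: "t *\<^sub>v z = 0\<^sub>v (rdim C2)"
        obtain y where y: "y \<in> carrier_vec (rdim Y)" "p *\<^sub>v y = z" using epiD[OF ep pc z] by blast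
        have dy: "d *\<^sub>v y \<in> carrier_vec (rdim Y2)" using dc y(1) by simp
        have "p2 *\<^sub>v (d *\<^sub>v y) = (t * p) *\<^sub>v y" using p2d[symmetric] p2c dc y(1) by simp
        also have "\<dots> = t *\<^sub>v (p *\<^sub>v y)" using tc pc y(1) by simp
        also have "\<dots> = 0\<^sub>v (rdim C2)" using y(2) tz by simp
        finally obtain x where x: "x \<in> carrier_vec (rdim X)" "d *\<^sub>v y = g0 *\<^sub>v x"
          using exactD1[OF exp2 p2c g0c dy] by blast
        have fx: "f *\<^sub>v x \<in> carrier_vec (rdim Y)" using fc x(1) by simp
        have "d *\<^sub>v y = d *\<^sub>v (f *\<^sub>v x)" using x(2) dc fc x(1) unfolding g0_def by simp
        then have "d *\<^sub>v (y - f *\<^sub>v x) = 0\<^sub>v (rdim Y2)" by (rule mat_vec_diff_zero[OF dc y(1) fx])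
        moreover have "y - f *\<^sub>v x \<in> carrier_vec (rdim Y)" using y(1) fx by simp
        ultimately obtain y1 where y1: "y1 \<in> carrier_vec (rdim Y1)" "y - f *\<^sub>v x = c *\<^sub>v y1"
          using exactD1[OF excd dc cc] by blast
        have cy1: "c *\<^sub>v y1 \<in> carrier_vec (rdim Y)" using cc y1(1) by simp
        have yeq: "y = f *\<^sub>v x + c *\<^sub>v y1" by (rule vec_eq_diff[OF y(1) fx cy1 y1(2)])
        have "z = p *\<^sub>v (f *\<^sub>v x + c *\<^sub>v y1)" using y(2) yeq by simp
        also have "\<dots> = p *\<^sub>v (f *\<^sub>v x) + p *\<^sub>v (c *\<^sub>v y1)" by (rule mult_add_distrib_mat_vec[OF pc fx cy1])
        also have "p *\<^sub>v (f *\<^sub>v x) = 0\<^sub>v (rdim C)" by (rule exactD2[OF exp pc fc x(1)])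
        also have "p *\<^sub>v (c *\<^sub>v y1) = s *\<^sub>v (p1 *\<^sub>v y1)" using pcs[symmetric] pc cc sc p1c y1(1)
          by (metis assoc_mult_mat_vec)
        also have "0\<^sub>v (rdim C) + s *\<^sub>v (p1 *\<^sub>v y1) = s *\<^sub>v (p1 *\<^sub>v y1)" using sc p1c y1(1) by simp
        finally show "\<exists>u\<in>carrier_vec (rdim C1). z = s *\<^sub>v u" using p1c y1(1)
          by (intro bexI[of _ "p1 *\<^sub>v y1"]) auto
      next
        fix u :: "'k vec" assume u: "u \<in> carrier_vec (rdim C1)"
        obtain y1 where y1: "y1 \<in> carrier_vec (rdim Y1)" "p1 *\<^sub>v y1 = u" using epiD[OF ep1 p1c u] by blast
        have "t *\<^sub>v (s *\<^sub>v u) = t *\<^sub>v ((s * p1) *\<^sub>v y1)" using y1 sc p1c by simp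
        also have "\<dots> = t *\<^sub>v ((p * c) *\<^sub>v y1)" using pcs by simp
        also have "\<dots> = (t * p) *\<^sub>v (c *\<^sub>v y1)" using tc pc cc y1(1) by simp
        also have "\<dots> = (p2 * d) *\<^sub>v (c *\<^sub>v y1)" using p2d by simp
        also have "\<dots> = p2 *\<^sub>v (d *\<^sub>v (c *\<^sub>v y1))" using p2c dc cc y1(1) by simp
        also have "\<dots> = 0\<^sub>v (rdim C2)" using exactD2[OF excd dc cc y1(1)] mat_vec_zero[OF p2c] by simp
        finally show "t *\<^sub>v (s *\<^sub>v u) = 0\<^sub>v (rdim C2)" .
      qed
      show "filt C" by (rule filt_ses[OF C1f C2f Cm sh th ms et exst])
    qed
  qed
qed

lemma filt_main:
  assumes "filt X" "filt Y" "is_hom X Y f"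
  shows "kerP X f \<and> cokP Y f"
  using assms
proof (induction "rdim X + rdim Y" arbitrary: X Y f rule: less_induct)
  case less
  note IH = less.hyps
  show ?case
  proof (cases rule: filt.cases[OF less.prems(1)])
    case (1 \<xi>)
    show ?thesis
    proof (cases rule: filt.cases[OF less.prems(2)])
      case (1 \<eta>)
      have "is_hom (\<xi> \<circ> \<phi>) (\<eta> \<circ> \<phi>) f" using less.prems(3) \<open>X = \<xi> \<circ> \<phi>\<close> \<open>Y = \<eta> \<circ> \<phi>\<close> by (simp only:)
      from case_base[OF \<open>\<xi> \<in> V\<close> \<open>\<eta> \<in> V\<close> this] show ?thesis
        using \<open>X = \<xi> \<circ> \<phi>\<close> \<open>Y = \<eta> \<circ> \<phi>\<close> by (simp only:)
    next
      case (2 A C B a b)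
      note h = 2(2-11)[folded 2(1)]
      show ?thesis
        by (rule case_Yext[OF IH less.prems(1) h less.prems(3)])
    qed
  next
    case (2 A C B a b)
    note h = 2(2-11)[folded 2(1)]
    show ?thesis
      by (rule case_Xext[OF IH h less.prems(2) less.prems(3)])
  qed
qed

lemma filt_wide: "wide \<iota>G {X. filt X}"
proof -
  let ?S = "{X. filt X}"
  have sc: "subcat \<iota>G ?S" unfolding subcat_def using filt_mods filt_iso by blast
  have "filt (zrep \<circ> \<phi>)" using filt.base wide_zero[OF V] by blast
  then have ne: "?S \<noteq> {}" by blast
  have ck: "closed_kernels \<iota>G ?S" unfolding closed_kernels_def
    using filt_main unfolding kerP_def by blast
  have cc: "closed_cokernels \<iota>G ?S" unfolding closed_cokernels_def
    using filt_main unfolding cokP_def by blast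
  have ce: "closed_extensions \<iota>G ?S" unfolding closed_extensions_def
    using filt_ses by blast
  show ?thesis unfolding wide_def using sc ne ck cc ce by blast
qed

lemma filt_pull: "\<sigma> \<in> mods \<iota>L \<Longrightarrow> filt (\<sigma> \<circ> \<phi>) \<longleftrightarrow> \<sigma> \<in> V"
proof
  assume "\<sigma> \<in> mods \<iota>L" "filt (\<sigma> \<circ> \<phi>)"
  then obtain \<xi> where \<xi>: "\<xi> \<in> V" "\<sigma> \<circ> \<phi> = \<xi> \<circ> \<phi>" using filt_descend factors_pull by blast
  have "\<sigma> = \<xi>"
  proof
    fix l obtain g where "\<phi> g = l" using phi_surj by (metis surjD)
    then show "\<sigma> l = \<xi> l" using \<xi>(2) by (metis comp_apply)
  qed
  then show "\<sigma> \<in> V" using \<xi>(1) by simp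
qed (rule filt.base)

end

context epi_ctx begin

lemma filt_exists:
  assumes V: "wide \<iota>L V"
  shows "\<exists>W. wide \<iota>G W \<and> (\<forall>\<sigma>\<in>mods \<iota>L. \<sigma> \<circ> \<phi> \<in> W \<longleftrightarrow> \<sigma> \<in> V)"
proof -
  interpret F: filt_ctx \<iota>G \<iota>L \<phi> V by unfold_locales (rule V)
  show ?thesis using F.filt_wide F.filt_pull by blast
qed

end



locale shad_ctx = epi_ctx \<iota>G \<iota>L \<phi>
  for \<iota>G :: "'k::field \<Rightarrow> 'g::{ring,monoid_mult}"
    and \<iota>L :: "'k \<Rightarrow> 'l::{ring,monoid_mult}"
    and \<phi> :: "'g \<Rightarrow> 'l" +
  fixes M :: "('g \<Rightarrow> 'k mat) set"
  assumes M: "subcat \<iota>G M" and hypL: "\<forall>\<sigma>\<in>mods \<iota>L. \<sigma> \<circ> \<phi> \<in> M"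
begin

lemma M_sub: "M \<subseteq> mods \<iota>G" using M unfolding subcat_def by auto

lemma shad_sub: "a \<in> widshad \<iota>G M \<Longrightarrow> a \<subseteq> M"
  unfolding widshad_def by auto

lemma inter_shad:
  assumes A: "A \<subseteq> widshad \<iota>G M"
  shows "M \<inter> \<Inter>A \<in> widshad \<iota>G M"
proof -
  have "\<forall>a\<in>A. \<exists>W. wide \<iota>G W \<and> a = W \<inter> M" using A unfolding widshad_def by auto
  then obtain Wf where Wf: "\<And>a. a \<in> A \<Longrightarrow> wide \<iota>G (Wf a) \<and> a = Wf a \<inter> M" by metis
  have w: "wide \<iota>G (mods \<iota>G \<inter> \<Inter>(Wf ` A))" using Wf by (intro wide_inter) auto
  have "(mods \<iota>G \<inter> \<Inter>(Wf ` A)) \<inter> M = M \<inter> \<Inter>A"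
    using Wf M_sub by blast
  then show ?thesis using w unfolding widshad_def by blast
qed

lemma shad_Int2: "x \<in> widshad \<iota>G M \<Longrightarrow> y \<in> widshad \<iota>G M \<Longrightarrow> x \<inter> y \<in> widshad \<iota>G M"
proof -
  assume xy: "x \<in> widshad \<iota>G M" "y \<in> widshad \<iota>G M"
  have "M \<inter> \<Inter>{x, y} \<in> widshad \<iota>G M" using xy by (intro inter_shad) auto
  moreover have "M \<inter> \<Inter>{x, y} = x \<inter> y" using shad_sub xy by auto
  ultimately show ?thesis by simp
qed

lemma complete: "complete_lattice_poset (widshad \<iota>G M)"
  unfolding complete_lattice_poset_def
proof (intro allI impI conjI)
  fix A assume A: "A \<subseteq> widshad \<iota>G M"
  let ?P = "widshad \<iota>G M"
  let ?U = "{t \<in> ?P. \<forall>a\<in>A. a \<subseteq> t}"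
  have "M \<inter> \<Inter>?U \<in> ?P" by (rule inter_shad) auto
  moreover have "\<forall>a\<in>A. a \<subseteq> M \<inter> \<Inter>?U" using A shad_sub by blast
  moreover have "\<forall>t\<in>?P. (\<forall>a\<in>A. a \<subseteq> t) \<longrightarrow> M \<inter> \<Inter>?U \<subseteq> t" by blast
  ultimately show "\<exists>s. is_lub ?P A s" unfolding is_lub_def by blast
  have "M \<inter> \<Inter>A \<in> ?P" by (rule inter_shad[OF A])
  moreover have "\<forall>a\<in>A. M \<inter> \<Inter>A \<subseteq> a" by blast
  moreover have "\<forall>t\<in>?P. (\<forall>a\<in>A. t \<subseteq> a) \<longrightarrow> t \<subseteq> M \<inter> \<Inter>A" using shad_sub by blast
  ultimately show "\<exists>s. is_glb ?P A s" unfolding is_glb_def by blast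
qed

lemma wideset_Int2: "x \<in> wideset \<iota> \<Longrightarrow> y \<in> wideset \<iota> \<Longrightarrow> x \<inter> y \<in> wideset \<iota>"
  for \<iota> :: "'k \<Rightarrow> 'a::{ring,monoid_mult}"
  unfolding wideset_def using wide_Int2 by blast

lemma map1: "meet_semilattice_map (wideset \<iota>G) (widshad \<iota>G M) (\<lambda>W. W \<inter> M)"
  unfolding meet_semilattice_map_def
proof (intro conjI ballI allI impI)
  show "meet_semilattice_poset (wideset \<iota>G)" by (rule meet_poset_Int) (rule wideset_Int2)
  show "meet_semilattice_poset (widshad \<iota>G M)" by (rule meet_poset_Int) (rule shad_Int2)
  fix x assume x: "x \<in> wideset \<iota>G"
  then show "x \<inter> M \<in> widshad \<iota>G M" unfolding wideset_def widshad_def by blast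
  fix y z assume y: "y \<in> wideset \<iota>G" and g: "is_glb (wideset \<iota>G) {x, y} z"
  have z: "z = x \<inter> y" using glb_unique[OF g wideset_Int2[OF x y]] .
  have "x \<inter> y \<inter> M \<in> widshad \<iota>G M" using wideset_Int2[OF x y] unfolding wideset_def widshad_def by blast
  moreover have "x \<inter> y \<inter> M = (x \<inter> M) \<inter> (y \<inter> M)" by blast
  ultimately show "is_glb (widshad \<iota>G M) {x \<inter> M, y \<inter> M} (z \<inter> M)"
    unfolding z by (metis glb_Int)
qed

lemma res_wide:
  assumes W: "wide \<iota>G W"
  shows "wide \<iota>L (res_mod \<phi> \<iota>L (W \<inter> M))"
proof -
  let ?S = "res_mod \<phi> \<iota>L (W \<inter> M)"
  have S: "?S = {\<sigma> \<in> mods \<iota>L. \<sigma> \<circ> \<phi> \<in> W}" unfolding res_mod_def using hypL by auto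
  note Ww = W[unfolded wide_def]
  have sc: "subcat \<iota>L ?S" unfolding subcat_def S
  proof (intro conjI ballI impI)
    fix \<rho> \<sigma> assume \<rho>: "\<rho> \<in> {\<sigma> \<in> mods \<iota>L. \<sigma> \<circ> \<phi> \<in> W}" and \<sigma>: "\<sigma> \<in> mods \<iota>L"
      and iso: "\<exists>F. is_iso \<rho> \<sigma> F"
    then have "\<sigma> \<circ> \<phi> \<in> W" using Ww pull_iso pull_mods unfolding subcat_def by blast
    then show "\<sigma> \<in> {\<sigma> \<in> mods \<iota>L. \<sigma> \<circ> \<phi> \<in> W}" using \<sigma> by blast
  qed auto
  have "zrep \<in> {\<sigma> \<in> mods \<iota>L. \<sigma> \<circ> \<phi> \<in> W}" using zrep_mods[of \<iota>L] wide_zero[OF W] zrep_pull by (metis (mono_tags, lifting) mem_Collect_eq)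
  then have ne: "?S \<noteq> {}" unfolding S by blast
  have ck: "closed_kernels \<iota>L ?S" unfolding closed_kernels_def S
  proof (intro ballI allI impI)
    fix X Y f K i assume "X \<in> {\<sigma> \<in> mods \<iota>L. \<sigma> \<circ> \<phi> \<in> W}" "Y \<in> {\<sigma> \<in> mods \<iota>L. \<sigma> \<circ> \<phi> \<in> W}"
      "K \<in> mods \<iota>L \<and> is_hom X Y f \<and> is_hom K X i \<and> mono_mat i \<and> exact_at i f"
    then show "K \<in> {\<sigma> \<in> mods \<iota>L. \<sigma> \<circ> \<phi> \<in> W}"
      using Ww pull_mods[of K] pull_hom[of X Y f] pull_hom[of K X i] unfolding closed_kernels_def
      by blast
  qed
  have cc: "closed_cokernels \<iota>L ?S" unfolding closed_cokernels_def S
  proof (intro ballI allI impI)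
    fix X Y f C p assume "X \<in> {\<sigma> \<in> mods \<iota>L. \<sigma> \<circ> \<phi> \<in> W}" "Y \<in> {\<sigma> \<in> mods \<iota>L. \<sigma> \<circ> \<phi> \<in> W}"
      "C \<in> mods \<iota>L \<and> is_hom X Y f \<and> is_hom Y C p \<and> epi_mat p \<and> exact_at f p"
    then show "C \<in> {\<sigma> \<in> mods \<iota>L. \<sigma> \<circ> \<phi> \<in> W}"
      using Ww pull_mods[of C] pull_hom[of X Y f] pull_hom[of Y C p] unfolding closed_cokernels_def
      by blast
  qed
  have ce: "closed_extensions \<iota>L ?S" unfolding closed_extensions_def S
  proof (intro ballI allI impI)
    fix A C B f g assume "A \<in> {\<sigma> \<in> mods \<iota>L. \<sigma> \<circ> \<phi> \<in> W}" "C \<in> {\<sigma> \<in> mods \<iota>L. \<sigma> \<circ> \<phi> \<in> W}"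
      "B \<in> mods \<iota>L \<and> is_hom A B f \<and> is_hom B C g \<and> mono_mat f \<and> epi_mat g \<and> exact_at f g"
    then show "B \<in> {\<sigma> \<in> mods \<iota>L. \<sigma> \<circ> \<phi> \<in> W}"
      using Ww pull_mods[of B] pull_hom[of A B f] pull_hom[of B C g] unfolding closed_extensions_def
      by blast
  qed
  show ?thesis unfolding wide_def using sc ne ck cc ce by blast
qed

lemma res_Int: "res_mod \<phi> \<iota>L (x \<inter> y) = res_mod \<phi> \<iota>L x \<inter> res_mod \<phi> \<iota>L y"
  unfolding res_mod_def by auto

lemma res_shad: "x \<in> widshad \<iota>G M \<Longrightarrow> res_mod \<phi> \<iota>L x \<in> wideset \<iota>L"
  unfolding widshad_def wideset_def using res_wide by auto

lemma map2: "meet_semilattice_map (widshad \<iota>G M) (wideset \<iota>L) (res_mod \<phi> \<iota>L)"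
  unfolding meet_semilattice_map_def
proof (intro conjI ballI allI impI)
  show "meet_semilattice_poset (wideset \<iota>L)" by (rule meet_poset_Int) (rule wideset_Int2)
  show "meet_semilattice_poset (widshad \<iota>G M)" by (rule meet_poset_Int) (rule shad_Int2)
  fix x assume x: "x \<in> widshad \<iota>G M"
  then show "res_mod \<phi> \<iota>L x \<in> wideset \<iota>L" by (rule res_shad)
  fix y z assume y: "y \<in> widshad \<iota>G M" and g: "is_glb (widshad \<iota>G M) {x, y} z"
  have z: "z = x \<inter> y" using glb_unique[OF g shad_Int2[OF x y]] .
  show "is_glb (wideset \<iota>L) {res_mod \<phi> \<iota>L x, res_mod \<phi> \<iota>L y} (res_mod \<phi> \<iota>L z)"
    unfolding z res_Int by (rule glb_Int) (rule wideset_Int2[OF res_shad[OF x] res_shad[OF y]])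
qed

lemma surj2: "res_mod \<phi> \<iota>L ` widshad \<iota>G M = wideset \<iota>L"
proof
  show "res_mod \<phi> \<iota>L ` widshad \<iota>G M \<subseteq> wideset \<iota>L" using res_shad by blast
  show "wideset \<iota>L \<subseteq> res_mod \<phi> \<iota>L ` widshad \<iota>G M"
  proof
    fix V assume "V \<in> wideset \<iota>L"
    then have V: "wide \<iota>L V" unfolding wideset_def by simp
    obtain W where W: "wide \<iota>G W" and WV: "\<forall>\<sigma>\<in>mods \<iota>L. \<sigma> \<circ> \<phi> \<in> W \<longleftrightarrow> \<sigma> \<in> V"
      using filt_exists[OF V] by blast
    have "res_mod \<phi> \<iota>L (W \<inter> M) = V" unfolding res_mod_def using WV hypL wide_sub[OF V] by auto
    moreover have "W \<inter> M \<in> widshad \<iota>G M" using W unfolding widshad_def by blast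
    ultimately show "V \<in> res_mod \<phi> \<iota>L ` widshad \<iota>G M" by blast
  qed
qed

lemma surj1: "(\<lambda>W. W \<inter> M) ` wideset \<iota>G = widshad \<iota>G M"
  unfolding wideset_def widshad_def by blast

end

theorem lemma7p2:
  fixes \<iota>G :: "'k::field \<Rightarrow> 'g::{ring,monoid_mult}"
    and \<iota>L :: "'k \<Rightarrow> 'l::{ring,monoid_mult}"
    and \<phi> :: "'g \<Rightarrow> 'l"
    and M :: "('g \<Rightarrow> 'k mat) set"
  assumes "fd_algebra \<iota>G" and "fd_algebra \<iota>L" and "alg_epi \<iota>G \<iota>L \<phi>"
    and "subcat \<iota>G M"
    and "\<forall>\<sigma>\<in>mods \<iota>L. \<sigma> \<circ> \<phi> \<in> M"
  shows "complete_lattice_poset (widshad \<iota>G M)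
    \<and> meet_semilattice_map (wideset \<iota>G) (widshad \<iota>G M) (\<lambda>W. W \<inter> M)
    \<and> (\<lambda>W. W \<inter> M) ` wideset \<iota>G = widshad \<iota>G M
    \<and> meet_semilattice_map (widshad \<iota>G M) (wideset \<iota>L) (res_mod \<phi> \<iota>L)
    \<and> res_mod \<phi> \<iota>L ` widshad \<iota>G M = wideset \<iota>L"
proof -
  interpret shad_ctx \<iota>G \<iota>L \<phi> M
    by unfold_locales (use assms in auto)
  show ?thesis using complete map1 surj1 map2 surj2 by blast
qed


end
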